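(* Assume one of (H1), (H2), (H3) holds, with the corresponding $\ell$, and let $(\lambda_n,U^n)$ be as in the setting. Then for every $\mathsf h\in C^1([0,L])$ with $\mathsf h(0)=\mathsf h(L)=0$, $$\int_0^L\mathsf h'\Big(\rho_1|\lambda_nv^{1,n}|^2+k_1|v^{1,n}_x|^2+\rho_2|\lambda_nv^{3,n}|^2+k_2|v^{3,n}_x|^2+\rho_1|\lambda_nv^{5,n}|^2+k_3|v^{5,n}_x|^2\Big)dx\longrightarrow0 .$$
   Context: Let $\rho_1,\rho_2,k_1,k_2,k_3,l,L>0$, $0<\beta<L$, $a_0>0$, $a=a_0$ on $(0,\beta)$, $a=0$ on $(\beta,L)$. Let $\mathcal H=(H^1_0(0,L)\times L^2(0,L))^3$ with inner product $(U,\tilde U)_{\mathcal H}=\int_0^L\big(k_1(v^1_x+v^3+lv^5)\overline{(\tilde v^1_x+\tilde v^3+l\tilde v^5)}+\rho_1v^2\overline{\tilde v^2}+k_2v^3_x\overline{\tilde v^3_x}+\rho_2v^4\overline{\tilde v^4}+k_3(v^5_x-lv^1)\overline{(\tilde v^5_x-l\tilde v^1)}+\rho_1v^6\overline{\tilde v^6}\big)dx$, $D(\mathcal A)=[(H^2\cap H^1_0)(0,L)\times H^1_0(0,L)]^3$, and $\mathcal A(v^1,\dots,v^6)=\big(v^2,\frac{k_1}{\rho_1}(v^1_x+v^3+lv^5)_x+\frac{lk_3}{\rho_1}(v^5_x-lv^1),v^4,\frac{k_2}{\rho_2}v^3_{xx}-\frac{k_1}{\rho_2}(v^1_x+v^3+lv^5),v^6,\frac{k_3}{\rho_1}(v^5_x-lv^1)_x-\frac{lk_1}{\rho_1}(v^1_x+v^3+lv^5)-\frac{a}{\rho_1}v^6\big)$.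 Hypotheses: (H1) $k_1/\rho_1=k_2/\rho_2$, $k_1=k_3$, $\ell=0$; (H2) $k_1/\rho_1=k_2/\rho_2$, $k_1\ne k_3$, $\ell=2$; (H3) $k_1/\rho_1\ne k_2/\rho_2$, $\ell=4$. Setting: $(\lambda_n)\subset\mathbb R\setminus\{0\}$ with $|\lambda_n|\to\infty$, $U^n=(v^{1,n},\dots,v^{6,n})\in D(\mathcal A)$ with $\|U^n\|_{\mathcal H}=1$, and $F^n:=\lambda_n^{\ell}(i\lambda_nI-\mathcal A)U^n\to0$ in $\mathcal H$. *)

theory Defs
  imports "HOL-Analysis.Analysis"
begin

definition L2 :: "real \<Rightarrow> (real \<Rightarrow> complex) \<Rightarrow> bool" where
  "L2 L g \<longleftrightarrow> set_borel_measurable lborel {0..L} g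
      \<and> set_integrable lborel {0..L} (\<lambda>x. (cmod (g x))\<^sup>2)"

text \<open>g (in L^2(0,L)) is the weak derivative of v on [0,L]; equivalently v is the
  absolutely continuous function v(x) = v(0) + int_0^x g, i.e. v in H^1(0,L) with v_x = g.\<close>
definition is_wderiv :: "real \<Rightarrow> (real \<Rightarrow> complex) \<Rightarrow> (real \<Rightarrow> complex) \<Rightarrow> bool" where
  "is_wderiv L v g \<longleftrightarrow> L2 L g
      \<and> (\<forall>x\<in>{0..L}. v x = v 0 + (LINT t:{0..x}|lborel. g t))"

definition H10 :: "real \<Rightarrow> (real \<Rightarrow> complex) \<Rightarrow> (real \<Rightarrow> complex) \<Rightarrow> bool" where
  "H10 L v g \<longleftrightarrow> is_wderiv L v g \<and> v 0 = 0 \<and> v L = 0"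

definition H2H10 :: "real \<Rightarrow> (real \<Rightarrow> complex) \<Rightarrow> (real \<Rightarrow> complex) \<Rightarrow> (real \<Rightarrow> complex) \<Rightarrow> bool" where
  "H2H10 L v g gg \<longleftrightarrow> H10 L v g \<and> is_wderiv L g gg"

text \<open>The norm of the energy space H, for a state (u1,...,u6) where u1x, u3x, u5x are
  the weak derivatives of u1, u3, u5.\<close>
definition Hnorm ::
  "real \<Rightarrow> real \<Rightarrow> real \<Rightarrow> real \<Rightarrow> real \<Rightarrow> real \<Rightarrow> real \<Rightarrow>
   (real \<Rightarrow> complex) \<Rightarrow> (real \<Rightarrow> complex) \<Rightarrow> (real \<Rightarrow> complex) \<Rightarrow>
   (real \<Rightarrow> complex) \<Rightarrow> (real \<Rightarrow> complex) \<Rightarrow> (real \<Rightarrow> complex) \<Rightarrow>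
   (real \<Rightarrow> complex) \<Rightarrow> (real \<Rightarrow> complex) \<Rightarrow> (real \<Rightarrow> complex) \<Rightarrow> real" where
  "Hnorm rho1 rho2 k1 k2 k3 l L u1 u1x u2 u3 u3x u4 u5 u5x u6 =
     sqrt (LINT x:{0..L}|lborel.
        k1 * (cmod (u1x x + u3 x + of_real l * u5 x))\<^sup>2 + rho1 * (cmod (u2 x))\<^sup>2
      + k2 * (cmod (u3x x))\<^sup>2 + rho2 * (cmod (u4 x))\<^sup>2
      + k3 * (cmod (u5x x - of_real l * u1 x))\<^sup>2 + rho1 * (cmod (u6 x))\<^sup>2)"

end

theory Submission
  imports Defs
begin

lemma sbm_mult:
  fixes f g :: "real \<Rightarrow> complex"
  assumes "set_borel_measurable lborel S f" "set_borel_measurable lborel S g"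
  shows "set_borel_measurable lborel S (\<lambda>x. f x * g x)"
proof -
  have "(\<lambda>x. (indicator S x *\<^sub>R f x) * (indicator S x *\<^sub>R g x)) \<in> borel_measurable lborel"
    using assms unfolding set_borel_measurable_def by measurable
  moreover have "(\<lambda>x. (indicator S x *\<^sub>R f x) * (indicator S x *\<^sub>R g x)) = (\<lambda>x. indicator S x *\<^sub>R (f x * g x))"
    by (auto simp: indicator_def fun_eq_iff)
  ultimately show ?thesis unfolding set_borel_measurable_def by simp
qed

lemma sbm_add:
  fixes f g :: "real \<Rightarrow> complex"
  assumes "set_borel_measurable lborel S f" "set_borel_measurable lborel S g"
  shows "set_borel_measurable lborel S (\<lambda>x. f x + g x)"
proof -
  have "(\<lambda>x. (indicator S x *\<^sub>R f x) + (indicator S x *\<^sub>R g x)) \<in> borel_measurable lborel"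
    using assms unfolding set_borel_measurable_def by measurable
  moreover have "(\<lambda>x. (indicator S x *\<^sub>R f x) + (indicator S x *\<^sub>R g x)) = (\<lambda>x. indicator S x *\<^sub>R (f x + g x))"
    by (auto simp: indicator_def fun_eq_iff)
  ultimately show ?thesis unfolding set_borel_measurable_def by simp
qed

lemma sbm_const:
  fixes c :: complex
  assumes "S \<in> sets lborel"
  shows "set_borel_measurable lborel S (\<lambda>x. c)"
  using assms unfolding set_borel_measurable_def by measurable

lemma sbm_cnj:
  fixes f :: "real \<Rightarrow> complex"
  assumes "set_borel_measurable lborel S f"
  shows "set_borel_measurable lborel S (\<lambda>x. cnj (f x))"
proof -
  have "(\<lambda>x. cnj (indicator S x *\<^sub>R f x)) \<in> borel_measurable lborel"
    using assms unfolding set_borel_measurable_def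
    by (intro borel_measurable_continuous_on[where f=cnj]) (auto intro: continuous_intros)
  moreover have "(\<lambda>x. cnj (indicator S x *\<^sub>R f x)) = (\<lambda>x. indicator S x *\<^sub>R cnj (f x))"
    by (auto simp: indicator_def fun_eq_iff)
  ultimately show ?thesis unfolding set_borel_measurable_def by simp
qed

lemma sbm_norm:
  fixes f :: "real \<Rightarrow> complex"
  assumes "set_borel_measurable lborel S f"
  shows "set_borel_measurable lborel S (\<lambda>x. complex_of_real (cmod (f x)))"
proof -
  have "(\<lambda>x. complex_of_real (cmod (indicator S x *\<^sub>R f x))) \<in> borel_measurable lborel"
    using assms unfolding set_borel_measurable_def by measurable
  moreover have "(\<lambda>x. complex_of_real (cmod (indicator S x *\<^sub>R f x))) = (\<lambda>x. indicator S x *\<^sub>R complex_of_real (cmod (f x)))"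
    by (auto simp: indicator_def fun_eq_iff)
  ultimately show ?thesis unfolding set_borel_measurable_def by simp
qed

lemma sint_finite_bound:
  fixes f :: "real \<Rightarrow> complex" and g :: "real \<Rightarrow> real"
  assumes "set_borel_measurable lborel {a..b} f" "set_integrable lborel {a..b} g"
    "\<And>x. x \<in> {a..b} \<Longrightarrow> cmod (f x) \<le> g x"
  shows "set_integrable lborel {a..b} f"
  unfolding set_integrable_def
proof (rule Bochner_Integration.integrable_bound)
  show "integrable lborel (\<lambda>x. indicator {a..b} x *\<^sub>R g x)"
    using assms(2) unfolding set_integrable_def .
  show "(\<lambda>x. indicator {a..b} x *\<^sub>R f x) \<in> borel_measurable lborel"
    using assms(1) unfolding set_borel_measurable_def .
  show "AE x in lborel. norm (indicator {a..b} x *\<^sub>R f x) \<le> norm (indicator {a..b} x *\<^sub>R g x)"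
    using assms(3) by (auto simp: indicator_def intro: order_trans[OF _ abs_ge_self])
qed

lemma sint_bound:
  fixes f :: "real \<Rightarrow> 'a::{banach, second_countable_topology}" and g :: "real \<Rightarrow> 'b::{banach, second_countable_topology}"
  assumes "set_integrable lborel S f" "set_borel_measurable lborel S g"
    "\<And>x. x \<in> S \<Longrightarrow> norm (g x) \<le> norm (f x)"
  shows "set_integrable lborel S g"
  using assms by (intro set_integrable_bound[OF assms(1,2)]) auto

lemma sbm_of_real:
  fixes f :: "real \<Rightarrow> real"
  assumes "set_borel_measurable lborel S f"
  shows "set_borel_measurable lborel S (\<lambda>x. complex_of_real (f x))"
proof -
  have "(\<lambda>x. complex_of_real (indicator S x *\<^sub>R f x)) \<in> borel_measurable lborel"
    using assms unfolding set_borel_measurable_def by measurable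
  moreover have "(\<lambda>x. complex_of_real (indicator S x *\<^sub>R f x)) = (\<lambda>x. indicator S x *\<^sub>R complex_of_real (f x))"
    by (auto simp: indicator_def fun_eq_iff)
  ultimately show ?thesis unfolding set_borel_measurable_def by simp
qed

lemma sbm_Re:
  fixes f :: "real \<Rightarrow> complex"
  assumes "set_borel_measurable lborel S f"
  shows "set_borel_measurable lborel S (\<lambda>x. Re (f x))"
proof -
  have "(\<lambda>x. Re (indicator S x *\<^sub>R f x)) \<in> borel_measurable lborel"
    using assms unfolding set_borel_measurable_def by measurable
  moreover have "(\<lambda>x. Re (indicator S x *\<^sub>R f x)) = (\<lambda>x. indicator S x *\<^sub>R Re (f x))"
    by (auto simp: indicator_def fun_eq_iff)
  ultimately show ?thesis unfolding set_borel_measurable_def by simp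
qed

lemma sbm_cmod:
  fixes f :: "real \<Rightarrow> complex"
  assumes "set_borel_measurable lborel S f"
  shows "set_borel_measurable lborel S (\<lambda>x. cmod (f x))"
proof -
  have "(\<lambda>x. cmod (indicator S x *\<^sub>R f x)) \<in> borel_measurable lborel"
    using assms unfolding set_borel_measurable_def by measurable
  moreover have "(\<lambda>x. cmod (indicator S x *\<^sub>R f x)) = (\<lambda>x. indicator S x *\<^sub>R cmod (f x))"
    by (auto simp: indicator_def fun_eq_iff)
  ultimately show ?thesis unfolding set_borel_measurable_def by simp
qed

lemma sbm_rmult:
  fixes f g :: "real \<Rightarrow> real"
  assumes "set_borel_measurable lborel S f" "set_borel_measurable lborel S g"
  shows "set_borel_measurable lborel S (\<lambda>x. f x * g x)"
proof -
  have "(\<lambda>x. (indicator S x *\<^sub>R f x) * (indicator S x *\<^sub>R g x)) \<in> borel_measurable lborel"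
    using assms unfolding set_borel_measurable_def by measurable
  moreover have "(\<lambda>x. (indicator S x *\<^sub>R f x) * (indicator S x *\<^sub>R g x)) = (\<lambda>x. indicator S x *\<^sub>R (f x * g x))"
    by (auto simp: indicator_def fun_eq_iff)
  ultimately show ?thesis unfolding set_borel_measurable_def by simp
qed

lemma sint_Re:
  fixes f :: "real \<Rightarrow> complex"
  assumes "set_integrable lborel S f"
  shows "set_integrable lborel S (\<lambda>x. Re (f x))" "(LINT x:S|lborel. Re (f x)) = Re (LINT x:S|lborel. f x)"
proof -
  have e: "(\<lambda>x. indicator S x *\<^sub>R Re (f x)) = (\<lambda>x. Re (indicator S x *\<^sub>R f x))"
    by (auto simp: indicator_def fun_eq_iff)
  show "set_integrable lborel S (\<lambda>x. Re (f x))"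
    using assms unfolding set_integrable_def e by (rule integrable_Re)
  show "(LINT x:S|lborel. Re (f x)) = Re (LINT x:S|lborel. f x)"
    unfolding set_lebesgue_integral_def e by (rule integral_Re) (use assms in \<open>simp add: set_integrable_def\<close>)
qed

lemma sint_const: "set_integrable lborel {a..b} (\<lambda>x::real. c::real)"
  by (rule borel_integrable_atLeastAtMost') (auto intro: continuous_intros)

lemma L2_meas: "L2 L p \<Longrightarrow> set_borel_measurable lborel {0..L} p"
  unfolding L2_def by simp

lemma L2_sq: "L2 L p \<Longrightarrow> set_integrable lborel {0..L} (\<lambda>x. (cmod (p x))\<^sup>2)"
  unfolding L2_def by simp

lemma L2_int:
  assumes "L2 L p" shows "set_integrable lborel {0..L} p"
proof (rule sint_bound[where f="\<lambda>x. 1 + (cmod (p x))\<^sup>2"])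
  show "set_integrable lborel {0..L} (\<lambda>x. 1 + (cmod (p x))\<^sup>2)"
    using L2_sq[OF assms] sint_const by (intro set_integral_add) auto
  show "set_borel_measurable lborel {0..L} p" using L2_meas[OF assms] .
  fix x
  have "cmod (p x) \<le> 1 + (cmod (p x))\<^sup>2"
    using sum_squares_ge_zero[of "cmod (p x) - 1" 0] by (simp add: power2_eq_square algebra_simps) (smt (verit) mult_nonneg_nonneg norm_ge_zero)
  then show "norm (p x) \<le> norm (1 + (cmod (p x))\<^sup>2)" by simp
qed

lemma L2_prod:
  assumes "L2 L p" "L2 L q" shows "set_integrable lborel {0..L} (\<lambda>x. p x * q x)"
proof (rule sint_bound[where f="\<lambda>x. (cmod (p x))\<^sup>2 + (cmod (q x))\<^sup>2"])
  show "set_integrable lborel {0..L} (\<lambda>x. (cmod (p x))\<^sup>2 + (cmod (q x))\<^sup>2)"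
    using L2_sq[OF assms(1)] L2_sq[OF assms(2)] by (intro set_integral_add) auto
  show "set_borel_measurable lborel {0..L} (\<lambda>x. p x * q x)"
    using L2_meas[OF assms(1)] L2_meas[OF assms(2)] by (rule sbm_mult)
  fix x
  have "2 * (cmod (p x) * cmod (q x)) \<le> (cmod (p x))\<^sup>2 + (cmod (q x))\<^sup>2"
    using sum_squares_ge_zero[of "cmod (p x) - cmod (q x)" 0] by (simp add: power2_eq_square algebra_simps)
  moreover have "0 \<le> cmod (p x) * cmod (q x)" by simp
  ultimately have "cmod (p x) * cmod (q x) \<le> (cmod (p x))\<^sup>2 + (cmod (q x))\<^sup>2" by linarith
  then show "norm (p x * q x) \<le> norm ((cmod (p x))\<^sup>2 + (cmod (q x))\<^sup>2)"
    by (simp add: norm_mult)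
qed

lemma L2_I:
  assumes "set_borel_measurable lborel {0..L} p" "set_integrable lborel {0..L} (\<lambda>x. (cmod (p x))\<^sup>2)"
  shows "L2 L p"
  using assms unfolding L2_def by simp

lemma L2_cnj: "L2 L p \<Longrightarrow> L2 L (\<lambda>x. cnj (p x))"
  unfolding L2_def by (auto intro: sbm_cnj)

lemma L2_add:
  assumes "L2 L p" "L2 L q" shows "L2 L (\<lambda>x. p x + q x)"
proof (rule L2_I)
  show "set_borel_measurable lborel {0..L} (\<lambda>x. p x + q x)"
    using L2_meas[OF assms(1)] L2_meas[OF assms(2)] by (rule sbm_add)
  show "set_integrable lborel {0..L} (\<lambda>x. (cmod (p x + q x))\<^sup>2)"
  proof (rule sint_bound[where f="\<lambda>x. 2 * (cmod (p x))\<^sup>2 + 2 * (cmod (q x))\<^sup>2"])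
    show "set_integrable lborel {0..L} (\<lambda>x. 2 * (cmod (p x))\<^sup>2 + 2 * (cmod (q x))\<^sup>2)"
      using L2_sq[OF assms(1)] L2_sq[OF assms(2)] by (intro set_integral_add) auto
    have "set_borel_measurable lborel {0..L} (\<lambda>x. complex_of_real (cmod (p x + q x)) * complex_of_real (cmod (p x + q x)))"
      using L2_meas[OF assms(1)] L2_meas[OF assms(2)] by (intro sbm_mult sbm_norm sbm_add)
    then have "set_borel_measurable lborel {0..L} (\<lambda>x. Re (complex_of_real (cmod (p x + q x)) * complex_of_real (cmod (p x + q x))))"
      by (rule sbm_Re)
    then show "set_borel_measurable lborel {0..L} (\<lambda>x. (cmod (p x + q x))\<^sup>2)"
      by (simp add: power2_eq_square)
    fix x
    have "cmod (p x + q x) \<le> cmod (p x) + cmod (q x)" by (rule norm_triangle_ineq)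
    then have "(cmod (p x + q x))\<^sup>2 \<le> (cmod (p x) + cmod (q x))\<^sup>2"
      by (simp add: power_mono)
    also have "\<dots> \<le> 2 * (cmod (p x))\<^sup>2 + 2 * (cmod (q x))\<^sup>2"
      using sum_squares_ge_zero[of "cmod (p x) - cmod (q x)" 0] by (simp add: power2_eq_square algebra_simps)
    finally show "norm ((cmod (p x + q x))\<^sup>2) \<le> norm (2 * (cmod (p x))\<^sup>2 + 2 * (cmod (q x))\<^sup>2)"
      by simp
  qed
qed

lemma L2_bdd:
  fixes b :: "real \<Rightarrow> complex"
  assumes "L2 L p" "set_borel_measurable lborel {0..L} b" "\<And>x. x \<in> {0..L} \<Longrightarrow> cmod (b x) \<le> B"
  shows "L2 L (\<lambda>x. b x * p x)"
proof (rule L2_I)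
  show "set_borel_measurable lborel {0..L} (\<lambda>x. b x * p x)"
    using assms(2) L2_meas[OF assms(1)] by (rule sbm_mult)
  show "set_integrable lborel {0..L} (\<lambda>x. (cmod (b x * p x))\<^sup>2)"
  proof (rule sint_bound[where f="\<lambda>x. B\<^sup>2 * (cmod (p x))\<^sup>2"])
    show "set_integrable lborel {0..L} (\<lambda>x. B\<^sup>2 * (cmod (p x))\<^sup>2)"
      using L2_sq[OF assms(1)] by auto
    have "set_borel_measurable lborel {0..L} (\<lambda>x. Re (complex_of_real (cmod (b x * p x)) * complex_of_real (cmod (b x * p x))))"
      using assms(2) L2_meas[OF assms(1)] by (intro sbm_Re sbm_mult sbm_norm)
    then show "set_borel_measurable lborel {0..L} (\<lambda>x. (cmod (b x * p x))\<^sup>2)"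
      by (simp add: power2_eq_square)
    fix x assume x: "x \<in> {0..L}"
    have "cmod (b x * p x) \<le> B * cmod (p x)"
      using assms(3)[OF x] by (simp add: norm_mult mult_right_mono)
    then have "(cmod (b x * p x))\<^sup>2 \<le> (B * cmod (p x))\<^sup>2"
      by (simp add: power_mono)
    then show "norm ((cmod (b x * p x))\<^sup>2) \<le> norm (B\<^sup>2 * (cmod (p x))\<^sup>2)"
      by (simp add: power_mult_distrib)
  qed
qed

lemma L2_cmult: "L2 L p \<Longrightarrow> L2 L (\<lambda>x. c * p x)"
  using L2_bdd[of L p "\<lambda>x. c" "cmod c"] sbm_const[of "{0..L}" c] by auto

lemma L2_uminus: "L2 L p \<Longrightarrow> L2 L (\<lambda>x. - p x)"
  using L2_cmult[of L p "-1"] by simp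

lemma L2_diff: "L2 L p \<Longrightarrow> L2 L q \<Longrightarrow> L2 L (\<lambda>x. p x - q x)"
  using L2_add[of L p "\<lambda>x. - q x"] L2_uminus[of L q] by simp

lemma L2_cont:
  assumes "continuous_on {0..L} p" shows "L2 L p"
proof (rule L2_I)
  show "set_borel_measurable lborel {0..L} p"
    using borel_measurable_continuous_on_indicator[OF _ assms] unfolding set_borel_measurable_def
    by simp
  show "set_integrable lborel {0..L} (\<lambda>x. (cmod (p x))\<^sup>2)"
    using assms by (intro borel_integrable_atLeastAtMost') (auto intro: continuous_intros)
qed

lemma L2_zero: "L2 L (\<lambda>x. 0)"
  by (rule L2_cont) auto

definition nsq :: "real \<Rightarrow> (real \<Rightarrow> complex) \<Rightarrow> real" where
  "nsq L p = (LINT x:{0..L}|lborel. (cmod (p x))\<^sup>2)"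

lemma nsq_nonneg: "0 \<le> nsq L p"
  unfolding nsq_def set_lebesgue_integral_def
  by (intro integral_nonneg_AE) (auto simp: indicator_def)

lemma quad_disc:
  fixes P I Q :: real
  assumes q: "\<And>t. 0 \<le> t\<^sup>2 * P - 2 * t * I + Q" and P: "0 \<le> P" and Q: "0 \<le> Q"
  shows "I \<le> sqrt P * sqrt Q"
proof (cases "P = 0")
  case True
  show ?thesis
  proof (rule ccontr)
    assume "\<not> ?thesis"
    then have "I > 0" using True by simp
    have h: "0 \<le> ((Q + 1) / (2 * I))\<^sup>2 * P - 2 * ((Q + 1) / (2 * I)) * I + Q" by (rule q)
    have "2 * ((Q + 1) / (2 * I)) * I = Q + 1" using \<open>I > 0\<close> by (simp add: field_simps)
    with h True show False by simp
  qed
next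
  case False
  then have "P > 0" using P by simp
  have "0 \<le> (I / P)\<^sup>2 * P - 2 * (I / P) * I + Q" by (rule q)
  also have "(I / P)\<^sup>2 * P - 2 * (I / P) * I + Q = Q - I\<^sup>2 / P"
    using \<open>P > 0\<close> by (simp add: field_simps power2_eq_square)
  finally have "I\<^sup>2 \<le> P * Q" using \<open>P > 0\<close> by (simp add: field_simps)
  then have "sqrt (I\<^sup>2) \<le> sqrt (P * Q)" by (rule real_sqrt_le_mono)
  then show ?thesis by (simp add: real_sqrt_mult)
qed

lemma sint_cmod:
  fixes f :: "real \<Rightarrow> complex"
  assumes "set_integrable lborel S f" shows "set_integrable lborel S (\<lambda>x. cmod (f x))"
proof (rule sint_bound[OF assms])
  have "set_borel_measurable lborel S f"
    using assms unfolding set_integrable_def set_borel_measurable_def by (rule borel_measurable_integrable)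
  then show "set_borel_measurable lborel S (\<lambda>x. cmod (f x))" by (rule sbm_cmod)
qed simp

lemma L2_prod_norm:
  assumes "L2 L p" "L2 L q"
  shows "set_integrable lborel {0..L} (\<lambda>x. cmod (p x) * cmod (q x))"
  using sint_cmod[OF L2_prod[OF assms]] by (simp add: norm_mult)

lemma CS:
  assumes "L2 L p" "L2 L q"
  shows "(LINT x:{0..L}|lborel. cmod (p x) * cmod (q x)) \<le> sqrt (nsq L p) * sqrt (nsq L q)"
proof (rule quad_disc[OF _ nsq_nonneg nsq_nonneg])
  fix t :: real
  have i1: "set_integrable lborel {0..L} (\<lambda>x. t\<^sup>2 * (cmod (p x))\<^sup>2)" using L2_sq[OF assms(1)] by auto
  have i2: "set_integrable lborel {0..L} (\<lambda>x. 2 * t * (cmod (p x) * cmod (q x)))" using L2_prod_norm[OF assms] by auto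
  have i3: "set_integrable lborel {0..L} (\<lambda>x. (cmod (q x))\<^sup>2)" using L2_sq[OF assms(2)] by auto
  have "0 \<le> (LINT x:{0..L}|lborel. (t * cmod (p x) - cmod (q x))\<^sup>2)"
    unfolding set_lebesgue_integral_def
    by (intro integral_nonneg_AE) (auto simp: indicator_def)
  also have "(LINT x:{0..L}|lborel. (t * cmod (p x) - cmod (q x))\<^sup>2)
     = (LINT x:{0..L}|lborel. t\<^sup>2 * (cmod (p x))\<^sup>2 - 2 * t * (cmod (p x) * cmod (q x)) + (cmod (q x))\<^sup>2)"
    by (simp add: power2_eq_square algebra_simps)
  also have "\<dots> = t\<^sup>2 * nsq L p - 2 * t * (LINT x:{0..L}|lborel. cmod (p x) * cmod (q x)) + nsq L q"
    using i1 i2 i3 unfolding nsq_def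
    by (simp add: set_integral_add set_integral_diff set_integral_diff(1))
  finally show "0 \<le> t\<^sup>2 * nsq L p - 2 * t * (LINT x:{0..L}|lborel. cmod (p x) * cmod (q x)) + nsq L q" .
qed

lemma ibp_core:
  fixes gu gw :: "real \<Rightarrow> complex"
  assumes iu: "set_integrable lborel {0..b} gu" and iw: "set_integrable lborel {0..b} gw"
  shows "(LINT x:{0..b}|lborel. gu x * (LINT t:{0..x}|lborel. gw t))
       + (LINT t:{0..b}|lborel. (LINT x:{0..t}|lborel. gu x) * gw t)
       = (LINT x:{0..b}|lborel. gu x) * (LINT t:{0..b}|lborel. gw t)"
proof -
  define A where "A = {0..b}"
  define u where "u x = indicator A x *\<^sub>R gu x" for x
  define w where "w x = indicator A x *\<^sub>R gw x" for x
  have u_int: "integrable lborel u" using iu unfolding u_def A_def set_integrable_def .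
  have w_int: "integrable lborel w" using iw unfolding w_def A_def set_integrable_def .
  have u_m[measurable]: "u \<in> borel_measurable lborel" using u_int by (rule borel_measurable_integrable)
  have w_m[measurable]: "w \<in> borel_measurable lborel" using w_int by (rule borel_measurable_integrable)
  define F where "F = (\<lambda>(x::real, t::real). u x * w t)"
  have F_m[measurable]: "F \<in> borel_measurable (lborel \<Otimes>\<^sub>M lborel)"
    unfolding F_def by measurable
  have F_int: "integrable (lborel \<Otimes>\<^sub>M lborel) F"
  proof (rule lborel_pair.Fubini_integrable[OF F_m])
    have "(\<lambda>x. \<integral> y. norm (F (x, y)) \<partial>lborel) = (\<lambda>x. norm (u x) * (\<integral> y. norm (w y) \<partial>lborel))"
      unfolding F_def by (simp add: norm_mult)
    moreover have "integrable lborel (\<lambda>x. norm (u x) * (\<integral> y. norm (w y) \<partial>lborel))"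
      using u_int by auto
    ultimately show "integrable lborel (\<lambda>x. \<integral> y. norm (F (x, y)) \<partial>lborel)" by simp
    show "AE x in lborel. integrable lborel (\<lambda>y. F (x, y))"
      unfolding F_def using w_int by auto
  qed
  define G1 where "G1 = (\<lambda>(x::real, t::real). if t \<le> x then u x * w t else 0)"
  define G2 where "G2 = (\<lambda>(x::real, t::real). if x < t then u x * w t else 0)"
  have G1_m[measurable]: "G1 \<in> borel_measurable (lborel \<Otimes>\<^sub>M lborel)"
    unfolding G1_def by measurable
  have G2_m[measurable]: "G2 \<in> borel_measurable (lborel \<Otimes>\<^sub>M lborel)"
    unfolding G2_def by measurable
  have G1_int: "integrable (lborel \<Otimes>\<^sub>M lborel) G1"
    by (rule Bochner_Integration.integrable_bound[OF F_int G1_m]) (auto simp: G1_def F_def)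
  have G2_int: "integrable (lborel \<Otimes>\<^sub>M lborel) G2"
    by (rule Bochner_Integration.integrable_bound[OF F_int G2_m]) (auto simp: G2_def F_def)
  have FG: "F = (\<lambda>p. G1 p + G2 p)"
    by (auto simp: F_def G1_def G2_def fun_eq_iff)
  have "integral\<^sup>L (lborel \<Otimes>\<^sub>M lborel) F = integral\<^sup>L (lborel \<Otimes>\<^sub>M lborel) G1 + integral\<^sup>L (lborel \<Otimes>\<^sub>M lborel) G2"
    unfolding FG using G1_int G2_int by simp
  moreover have "integral\<^sup>L (lborel \<Otimes>\<^sub>M lborel) F = (\<integral>x. u x \<partial>lborel) * (\<integral>t. w t \<partial>lborel)"
  proof -
    have "integral\<^sup>L (lborel \<Otimes>\<^sub>M lborel) F = (\<integral>x. (\<integral>t. u x * w t \<partial>lborel) \<partial>lborel)"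
      using lborel_pair.integral_fst'[OF F_int] unfolding F_def by simp
    also have "\<dots> = (\<integral>x. u x * (\<integral>t. w t \<partial>lborel) \<partial>lborel)" by simp
    also have "\<dots> = (\<integral>x. u x \<partial>lborel) * (\<integral>t. w t \<partial>lborel)" by simp
    finally show ?thesis .
  qed
  moreover have "integral\<^sup>L (lborel \<Otimes>\<^sub>M lborel) G1 = (LINT x:{0..b}|lborel. gu x * (LINT t:{0..x}|lborel. gw t))"
  proof -
    have "integral\<^sup>L (lborel \<Otimes>\<^sub>M lborel) G1 = (\<integral>x. (\<integral>t. (if t \<le> x then u x * w t else 0) \<partial>lborel) \<partial>lborel)"
      using lborel_pair.integral_fst'[OF G1_int] unfolding G1_def by simp
    also have "\<dots> = (\<integral>x. indicator A x *\<^sub>R (gu x * (LINT t:{0..x}|lborel. gw t)) \<partial>lborel)"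
    proof (rule Bochner_Integration.integral_cong[OF refl])
      fix x
      show "(\<integral>t. (if t \<le> x then u x * w t else 0) \<partial>lborel) = indicator A x *\<^sub>R (gu x * (LINT t:{0..x}|lborel. gw t))"
      proof (cases "x \<in> A")
        case True
        have eq: "(\<lambda>t. if t \<le> x then u x * w t else 0) = (\<lambda>t. gu x * (indicator {0..x} t *\<^sub>R gw t))"
          using True by (auto simp: u_def w_def A_def indicator_def fun_eq_iff)
        show ?thesis
          apply (subst eq, subst integral_mult_right_zero)
          using True by (simp add: set_lebesgue_integral_def)
      next
        case False
        then have "u x = 0" "indicator A x = (0::real)" by (simp_all add: u_def)
        then have "(\<lambda>t. if t \<le> x then u x * w t else 0) = (\<lambda>t. 0)" by auto
        then show ?thesis using \<open>indicator A x = (0::real)\<close> by (simp del: indicator_simps)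
      qed
    qed
    finally show ?thesis unfolding A_def set_lebesgue_integral_def .
  qed
  moreover have "integral\<^sup>L (lborel \<Otimes>\<^sub>M lborel) G2 = (LINT t:{0..b}|lborel. (LINT x:{0..t}|lborel. gu x) * gw t)"
  proof -
    have "integral\<^sup>L (lborel \<Otimes>\<^sub>M lborel) G2 = (\<integral>t. (\<integral>x. (if x < t then u x * w t else 0) \<partial>lborel) \<partial>lborel)"
      using lborel_pair.integral_snd[of "\<lambda>x t. if x < t then u x * w t else 0"] G2_int unfolding G2_def by simp
    also have "\<dots> = (\<integral>t. indicator A t *\<^sub>R ((LINT x:{0..t}|lborel. gu x) * gw t) \<partial>lborel)"
    proof (rule Bochner_Integration.integral_cong[OF refl])
      fix t
      show "(\<integral>x. (if x < t then u x * w t else 0) \<partial>lborel) = indicator A t *\<^sub>R ((LINT x:{0..t}|lborel. gu x) * gw t)"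
      proof (cases "t \<in> A")
        case True
        have eq: "(\<lambda>x. if x < t then u x * w t else 0) = (\<lambda>x. (indicator {0..<t} x *\<^sub>R gu x) * gw t)"
          using True by (auto simp: u_def w_def A_def indicator_def fun_eq_iff)
        have "(\<integral>x. (if x < t then u x * w t else 0) \<partial>lborel) = (LINT x:{0..<t}|lborel. gu x) * gw t"
          by (subst eq, subst integral_mult_left_zero) (simp add: set_lebesgue_integral_def)
        also have "(LINT x:{0..<t}|lborel. gu x) = (LINT x:{0..t}|lborel. gu x)"
        proof (rule set_integral_cong_set)
          have "{0..t} \<subseteq> A" using True by (auto simp: A_def)
          then have "set_integrable lborel {0..t} gu" using iu unfolding A_def
            by (intro set_integrable_subset[OF iu]) auto
          then show "set_borel_measurable lborel {0..t} gu"
            unfolding set_integrable_def set_borel_measurable_def by (rule borel_measurable_integrable)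
          have "set_integrable lborel {0..<t} gu" using True iu unfolding A_def
            by (intro set_integrable_subset[OF iu]) auto
          then show "set_borel_measurable lborel {0..<t} gu"
            unfolding set_integrable_def set_borel_measurable_def by (rule borel_measurable_integrable)
          show "AE x in lborel. (x \<in> {0..t}) = (x \<in> {0..<t})"
            using AE_lborel_singleton[of t] by eventually_elim auto
        qed
        finally show ?thesis using True by simp
      next
        case False
        then have "w t = 0" "indicator A t = (0::real)" by (simp_all add: w_def)
        then have "(\<lambda>x. if x < t then u x * w t else 0) = (\<lambda>x. 0)" by auto
        then show ?thesis using \<open>indicator A t = (0::real)\<close> by (simp del: indicator_simps)
      qed
    qed
    finally show ?thesis unfolding A_def set_lebesgue_integral_def .
  qed
  ultimately show ?thesis unfolding u_def w_def A_def set_lebesgue_integral_def by simp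
qed

lemma sint_cong:
  fixes f g :: "real \<Rightarrow> 'a::{banach, second_countable_topology}"
  assumes "\<And>x. x \<in> A \<Longrightarrow> f x = g x"
  shows "(LINT x:A|lborel. f x) = (LINT x:A|lborel. g x)"
  unfolding set_lebesgue_integral_def
  by (rule Bochner_Integration.integral_cong) (auto simp: assms indicator_def)

lemma sintegrable_cong:
  fixes f g :: "real \<Rightarrow> 'a::{banach, second_countable_topology}"
  assumes "\<And>x. x \<in> A \<Longrightarrow> f x = g x" "set_integrable lborel A f"
  shows "set_integrable lborel A g"
proof -
  have "(\<lambda>x. indicator A x *\<^sub>R f x) = (\<lambda>x. indicator A x *\<^sub>R g x)"
    using assms(1) by (auto simp: indicator_def fun_eq_iff)
  then show ?thesis using assms(2) unfolding set_integrable_def by simp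
qed

lemma wd_L2: "is_wderiv L v g \<Longrightarrow> L2 L g"
  unfolding is_wderiv_def by blast

lemma wd_eq: "is_wderiv L v g \<Longrightarrow> x \<in> {0..L} \<Longrightarrow> v x = v 0 + (LINT t:{0..x}|lborel. g t)"
  unfolding is_wderiv_def by blast

lemma wd_sub: "is_wderiv L v g \<Longrightarrow> x \<in> {0..L} \<Longrightarrow> set_integrable lborel {0..x} g"
  by (rule set_integrable_subset[OF L2_int[OF wd_L2]]) auto

lemma wd_cont:
  assumes "is_wderiv L v g" shows "continuous_on {0..L} v"
proof -
  have gi: "set_integrable lborel {0..L} g" using L2_int[OF wd_L2[OF assms]] .
  have "g integrable_on {0..L}" using set_borel_integral_eq_integral(1)[OF gi] .
  then have c: "continuous_on {0..L} (\<lambda>x. integral {0..x} g)" by (rule indefinite_integral_continuous_1)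
  have c2: "continuous_on {0..L} (\<lambda>x. v 0 + integral {0..x} g)"
    by (intro continuous_intros c)
  have eq: "v x = v 0 + integral {0..x} g" if x: "x \<in> {0..L}" for x
    using wd_eq[OF assms x] set_borel_integral_eq_integral(2)[OF wd_sub[OF assms x]] by simp
  show ?thesis by (rule continuous_on_cong[THEN iffD2, OF refl eq c2])
qed

lemma wd_L2v: "is_wderiv L v g \<Longrightarrow> L2 L v"
  by (rule L2_cont[OF wd_cont])

lemma wd_bdd:
  assumes "is_wderiv L v g" obtains B where "\<And>x. x \<in> {0..L} \<Longrightarrow> cmod (v x) \<le> B"
proof -
  have "compact (v ` {0..L})" by (rule compact_continuous_image[OF wd_cont[OF assms]]) simp
  then have "bounded (v ` {0..L})" by (rule compact_imp_bounded)
  then obtain B where "\<forall>y\<in>v ` {0..L}. norm y \<le> B" unfolding bounded_iff by blast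
  then show ?thesis by (intro that[of B]) auto
qed

lemma wd_I:
  assumes "L2 L g" "\<And>x. x \<in> {0..L} \<Longrightarrow> v x = v 0 + (LINT t:{0..x}|lborel. g t)"
  shows "is_wderiv L v g"
  using assms unfolding is_wderiv_def by blast

lemma wd_add:
  assumes "is_wderiv L u gu" "is_wderiv L w gw"
  shows "is_wderiv L (\<lambda>x. u x + w x) (\<lambda>x. gu x + gw x)"
proof (rule wd_I)
  show "L2 L (\<lambda>x. gu x + gw x)" using L2_add[OF wd_L2[OF assms(1)] wd_L2[OF assms(2)]] .
  fix x assume x: "x \<in> {0..L}"
  show "u x + w x = u 0 + w 0 + (LINT t:{0..x}|lborel. gu t + gw t)"
    using wd_eq[OF assms(1) x] wd_eq[OF assms(2) x] set_integral_add(2)[OF wd_sub[OF assms(1) x] wd_sub[OF assms(2) x]]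
    by simp
qed

lemma wd_cmult:
  assumes "is_wderiv L u gu"
  shows "is_wderiv L (\<lambda>x. c * u x) (\<lambda>x. c * gu x)"
proof (rule wd_I)
  show "L2 L (\<lambda>x. c * gu x)" using L2_cmult[OF wd_L2[OF assms]] .
  fix x assume x: "x \<in> {0..L}"
  show "c * u x = c * u 0 + (LINT t:{0..x}|lborel. c * gu t)"
    using wd_eq[OF assms x] by (simp add: algebra_simps)
qed

lemma wd_diff:
  assumes "is_wderiv L u gu" "is_wderiv L w gw"
  shows "is_wderiv L (\<lambda>x. u x - w x) (\<lambda>x. gu x - gw x)"
  using wd_add[OF assms(1) wd_cmult[OF assms(2), of "-1"]] by simp

lemma wd_cnj:
  assumes "is_wderiv L u gu"
  shows "is_wderiv L (\<lambda>x. cnj (u x)) (\<lambda>x. cnj (gu x))"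
proof (rule wd_I)
  show "L2 L (\<lambda>x. cnj (gu x))" using L2_cnj[OF wd_L2[OF assms]] .
  fix x assume x: "x \<in> {0..L}"
  have e: "(\<lambda>t. indicator {0..x} t *\<^sub>R cnj (gu t)) = (\<lambda>t. cnj (indicator {0..x} t *\<^sub>R gu t))"
    by (simp add: fun_eq_iff)
  have "(LINT t:{0..x}|lborel. cnj (gu t)) = cnj (LINT t:{0..x}|lborel. gu t)"
    unfolding set_lebesgue_integral_def e by (rule Bochner_Integration.integral_cnj)
  then show "cnj (u x) = cnj (u 0) + (LINT t:{0..x}|lborel. cnj (gu t))"
    using wd_eq[OF assms x] by simp
qed

lemma alg_mult_aux:
  fixes A B U W u0 w0 ux wx :: complex
  assumes "A - w0 * U + (B - u0 * W) = U * W" "ux = u0 + U" "wx = w0 + W"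
  shows "ux * wx = u0 * w0 + (A + B)"
proof -
  have "A + B = U * W + w0 * U + u0 * W" using assms(1) by (simp add: algebra_simps)
  then show ?thesis using assms(2,3) by (simp add: algebra_simps)
qed

lemma wd_mult:
  assumes u: "is_wderiv L u gu" and w: "is_wderiv L w gw"
  shows "is_wderiv L (\<lambda>x. u x * w x) (\<lambda>x. gu x * w x + u x * gw x)"
proof (rule wd_I)
  obtain Bu where Bu: "\<And>x. x \<in> {0..L} \<Longrightarrow> cmod (u x) \<le> Bu" using wd_bdd[OF u] by blast
  obtain Bw where Bw: "\<And>x. x \<in> {0..L} \<Longrightarrow> cmod (w x) \<le> Bw" using wd_bdd[OF w] by blast
  have L1: "L2 L (\<lambda>x. w x * gu x)"
    by (rule L2_bdd[OF wd_L2[OF u] L2_meas[OF wd_L2v[OF w]] Bw])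
  have L2': "L2 L (\<lambda>x. u x * gw x)"
    by (rule L2_bdd[OF wd_L2[OF w] L2_meas[OF wd_L2v[OF u]] Bu])
  show "L2 L (\<lambda>x. gu x * w x + u x * gw x)" using L2_add[OF L1 L2'] by (simp add: mult.commute)
  fix x assume x: "x \<in> {0..L}"
  define S where "S = {0..x}"
  have sub: "\<And>t. t \<in> S \<Longrightarrow> t \<in> {0..L}" using x by (auto simp: S_def)
  have iu: "set_integrable lborel S gu" using wd_sub[OF u x] by (simp add: S_def)
  have iw: "set_integrable lborel S gw" using wd_sub[OF w x] by (simp add: S_def)
  have i1: "set_integrable lborel S (\<lambda>t. gu t * w t)"
    using set_integrable_subset[OF L2_int[OF L1], of S] x by (auto simp: S_def mult.commute)
  have i2: "set_integrable lborel S (\<lambda>t. u t * gw t)"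
    using set_integrable_subset[OF L2_int[OF L2'], of S] x by (auto simp: S_def)
  have core: "(LINT s:S|lborel. gu s * (LINT t:{0..s}|lborel. gw t))
       + (LINT s:S|lborel. (LINT t:{0..s}|lborel. gu t) * gw s)
       = (LINT s:S|lborel. gu s) * (LINT t:S|lborel. gw t)"
    unfolding S_def by (rule ibp_core[OF iu[unfolded S_def] iw[unfolded S_def]])
  have e1: "(LINT s:S|lborel. gu s * (LINT t:{0..s}|lborel. gw t)) = (LINT s:S|lborel. gu s * w s - w 0 * gu s)"
  proof (rule sint_cong)
    fix s assume "s \<in> S"
    then have "w s = w 0 + (LINT t:{0..s}|lborel. gw t)" using wd_eq[OF w] sub by blast
    then show "gu s * (LINT t:{0..s}|lborel. gw t) = gu s * w s - w 0 * gu s" by (simp add: algebra_simps)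
  qed
  have e2: "(LINT s:S|lborel. (LINT t:{0..s}|lborel. gu t) * gw s) = (LINT s:S|lborel. u s * gw s - u 0 * gw s)"
  proof (rule sint_cong)
    fix s assume "s \<in> S"
    then have "u s = u 0 + (LINT t:{0..s}|lborel. gu t)" using wd_eq[OF u] sub by blast
    then show "(LINT t:{0..s}|lborel. gu t) * gw s = u s * gw s - u 0 * gw s" by (simp add: algebra_simps)
  qed
  have f1: "(LINT s:S|lborel. gu s * w s - w 0 * gu s) = (LINT s:S|lborel. gu s * w s) - w 0 * (LINT s:S|lborel. gu s)"
    using i1 iu by simp
  have f2: "(LINT s:S|lborel. u s * gw s - u 0 * gw s) = (LINT s:S|lborel. u s * gw s) - u 0 * (LINT s:S|lborel. gw s)"
    using i2 iw by simp
  have f3: "(LINT s:S|lborel. gu s * w s + u s * gw s) = (LINT s:S|lborel. gu s * w s) + (LINT s:S|lborel. u s * gw s)"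
    using i1 i2 by simp
  have f4: "u x = u 0 + (LINT s:S|lborel. gu s)" "w x = w 0 + (LINT s:S|lborel. gw s)"
    using wd_eq[OF u x] wd_eq[OF w x] by (simp_all add: S_def)
  have f5: "(LINT s:S|lborel. gu s * w s) - w 0 * (LINT s:S|lborel. gu s) + ((LINT s:S|lborel. u s * gw s) - u 0 * (LINT s:S|lborel. gw s))
     = (LINT s:S|lborel. gu s) * (LINT t:S|lborel. gw t)"
    using core unfolding e1 e2 f1 f2 .
  have "u x * w x = u 0 * w 0 + ((LINT s:S|lborel. gu s * w s) + (LINT s:S|lborel. u s * gw s))"
    by (rule alg_mult_aux[OF f5 f4])
  then have "u x * w x = u 0 * w 0 + (LINT s:S|lborel. gu s * w s + u s * gw s)"
    unfolding f3 .
  then show "u x * w x = u 0 * w 0 + (LINT t:{0..x}|lborel. gu t * w t + u t * gw t)"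
    unfolding S_def .
qed

lemma wd_of_real:
  fixes h h' :: "real \<Rightarrow> real"
  assumes hd: "\<forall>x\<in>{0..L}. (h has_real_derivative h' x) (at x within {0..L})"
    and hc: "continuous_on {0..L} h'"
  shows "is_wderiv L (\<lambda>x. complex_of_real (h x)) (\<lambda>x. complex_of_real (h' x))"
proof (rule wd_I)
  show "L2 L (\<lambda>x. complex_of_real (h' x))" by (rule L2_cont) (intro continuous_intros hc)
  fix x assume x: "x \<in> {0..L}"
  have "integral\<^sup>L lborel (\<lambda>t. indicator {0..x} t *\<^sub>R h' t) = h x - h 0"
  proof (rule integral_FTC_atLeastAtMost)
    show "0 \<le> x" using x by simp
    fix t assume t: "0 \<le> t" "t \<le> x"
    have "(h has_real_derivative h' t) (at t within {0..L})" using hd t x by auto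
    then have "(h has_real_derivative h' t) (at t within {0..x})"
      by (rule DERIV_subset) (use x in auto)
    then show "(h has_vector_derivative h' t) (at t within {0..x})"
      by (simp add: has_real_derivative_iff_has_vector_derivative)
  next
    show "continuous_on {0..x} h'" by (rule continuous_on_subset[OF hc]) (use x in auto)
  qed
  then have "(LINT t:{0..x}|lborel. h' t) = h x - h 0" by (simp add: set_lebesgue_integral_def)
  then show "complex_of_real (h x) = complex_of_real (h 0) + (LINT t:{0..x}|lborel. complex_of_real (h' t))"
    by (simp add: set_integral_complex_of_real)
qed


lemma wd_ends_zero:
  assumes "is_wderiv L p gp" "p 0 = 0" "p L = 0" "0 \<le> L"
  shows "(LINT x:{0..L}|lborel. gp x) = 0"
  using wd_eq[OF assms(1), of L] assms(2-4) by simp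

lemma cmod_mult_self: "cmod a * cmod a = Re a * Re a + Im a * Im a"
  using cmod_power2[of a] by (simp add: power2_eq_square)

lemma re_aux1:
  fixes a b c d :: complex and hh hd :: real
  shows "Re ((complex_of_real hd * a + complex_of_real hh * b) * cnj a + complex_of_real hh * a * cnj b)
    = hd * (cmod a)\<^sup>2 + 2 * hh * Re (b * cnj a)"
  by (simp add: cmod_mult_self algebra_simps power2_eq_square)

lemma energy_h:
  fixes h h' :: "real \<Rightarrow> real"
  assumes hd: "\<forall>x\<in>{0..L}. (h has_real_derivative h' x) (at x within {0..L})"
    and hc: "continuous_on {0..L} h'" and h0: "h 0 = 0" and hL: "h L = 0" and L: "0 \<le> L"
    and v: "is_wderiv L v g"
  shows "(LINT x:{0..L}|lborel. h' x * (cmod (v x))\<^sup>2 + 2 * h x * Re (g x * cnj (v x))) = 0"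
proof -
  have w: "is_wderiv L (\<lambda>x. complex_of_real (h x) * v x * cnj (v x))
     (\<lambda>x. (complex_of_real (h' x) * v x + complex_of_real (h x) * g x) * cnj (v x) + complex_of_real (h x) * v x * cnj (g x))"
    using wd_mult[OF wd_mult[OF wd_of_real[OF hd hc] v] wd_cnj[OF v]] by simp
  have "(LINT x:{0..L}|lborel. (complex_of_real (h' x) * v x + complex_of_real (h x) * g x) * cnj (v x) + complex_of_real (h x) * v x * cnj (g x)) = 0"
    by (rule wd_ends_zero[OF w]) (use h0 hL L in simp_all)
  then have "(LINT x:{0..L}|lborel. Re ((complex_of_real (h' x) * v x + complex_of_real (h x) * g x) * cnj (v x) + complex_of_real (h x) * v x * cnj (g x))) = 0"
    using sint_Re(2)[OF L2_int[OF wd_L2[OF w]]] by simp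
  then show ?thesis by (simp only: re_aux1)
qed

lemma re_aux2:
  fixes a b c d :: complex
  shows "Re (b * cnj a + c * cnj d) = Re (b * cnj a) + Re (c * cnj d)"
  by simp

lemma ibp_zero:
  assumes v: "H10 L v gv" and w: "is_wderiv L w gw" and L: "0 \<le> L"
  shows "(LINT x:{0..L}|lborel. Re (gw x * cnj (v x)) + Re (w x * cnj (gv x))) = 0"
proof -
  have v': "is_wderiv L v gv" "v 0 = 0" "v L = 0" using v unfolding H10_def by auto
  have p: "is_wderiv L (\<lambda>x. w x * cnj (v x)) (\<lambda>x. gw x * cnj (v x) + w x * cnj (gv x))"
    using wd_mult[OF w wd_cnj[OF v'(1)]] .
  have "(LINT x:{0..L}|lborel. gw x * cnj (v x) + w x * cnj (gv x)) = 0"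
    by (rule wd_ends_zero[OF p]) (use v' L in simp_all)
  then have "(LINT x:{0..L}|lborel. Re (gw x * cnj (v x) + w x * cnj (gv x))) = 0"
    using sint_Re(2)[OF L2_int[OF wd_L2[OF p]]] by simp
  then show ?thesis by (simp only: re_aux2)
qed

lemma sq_rep:
  assumes u: "is_wderiv L u gu" and u0: "u 0 = 0" and x: "x \<in> {0..L}"
  shows "(cmod (u x))\<^sup>2 = (LINT t:{0..x}|lborel. 2 * Re (gu t * cnj (u t)))"
proof -
  have p: "is_wderiv L (\<lambda>x. u x * cnj (u x)) (\<lambda>x. gu x * cnj (u x) + u x * cnj (gu x))"
    using wd_mult[OF u wd_cnj[OF u]] .
  have "u x * cnj (u x) = (LINT t:{0..x}|lborel. gu t * cnj (u t) + u t * cnj (gu t))"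
    using wd_eq[OF p x] u0 by simp
  then have "Re (u x * cnj (u x)) = (LINT t:{0..x}|lborel. Re (gu t * cnj (u t) + u t * cnj (gu t)))"
    using sint_Re(2)[OF wd_sub[OF p x]] by simp
  also have "\<dots> = (LINT t:{0..x}|lborel. 2 * Re (gu t * cnj (u t)))"
    by (rule sint_cong) (simp add: algebra_simps)
  finally show ?thesis by (simp add: cmod_mult_self power2_eq_square)
qed

lemma sint_const_val:
  assumes "0 \<le> L" shows "(LINT x:{0..L}|lborel. (c::real)) = c * L"
proof -
  have "integral\<^sup>L lborel (\<lambda>x. indicator {0..L} x *\<^sub>R c) = c * L - c * 0"
    by (rule integral_FTC_atLeastAtMost[where F="\<lambda>x. c * x"])
       (auto simp: assms intro!: derivative_eq_intros continuous_intros)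
  then show ?thesis by (simp add: set_lebesgue_integral_def)
qed

lemma sint_mono_sub:
  fixes f :: "real \<Rightarrow> real"
  assumes "set_integrable lborel {0..L} f" "\<And>t. t \<in> {0..L} \<Longrightarrow> 0 \<le> f t" "x \<in> {0..L}"
  shows "(LINT t:{0..x}|lborel. f t) \<le> (LINT t:{0..L}|lborel. f t)"
proof -
  have i2: "set_integrable lborel {0..x} f" by (rule set_integrable_subset[OF assms(1)]) (use assms(3) in auto)
  show ?thesis
    unfolding set_lebesgue_integral_def
    using i2 assms(1) unfolding set_integrable_def
    by (rule integral_mono) (use assms(2,3) in \<open>auto simp: indicator_def\<close>)
qed

lemma amgm_t:
  fixes a b t :: real assumes "t > 0"
  shows "2 * (a * b) \<le> t * a\<^sup>2 + b\<^sup>2 / t"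
proof -
  have "0 \<le> (t * a - b)\<^sup>2 / t" using assms by simp
  also have "(t * a - b)\<^sup>2 / t = t * a\<^sup>2 + b\<^sup>2 / t - 2 * (a * b)"
    using assms by (simp add: field_simps power2_eq_square)
  finally show ?thesis by simp
qed

lemma half_aux: "(N::real) \<le> N / 2 + 2 * X \<Longrightarrow> N \<le> 4 * X" by linarith

lemma poinc:
  assumes u: "is_wderiv L u gu" and u0: "u 0 = 0" and v: "is_wderiv L v gv" and v0: "v 0 = 0"
    and L: "L > 0" and r: "L2 L r" and s: "L2 L s"
    and pw: "\<And>x. x \<in> {0..L} \<Longrightarrow> Re (gu x * cnj (u x)) + Re (gv x * cnj (v x))
              \<le> cmod (r x) * cmod (u x) + cmod (s x) * cmod (v x)"
  shows "nsq L u + nsq L v \<le> 4 * L\<^sup>2 * (nsq L r + nsq L s)"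
proof -
  define t where "t = 1 / (2 * L)"
  have t: "t > 0" using L by (simp add: t_def)
  define \<phi> where "\<phi> x = t * ((cmod (u x))\<^sup>2 + (cmod (v x))\<^sup>2) + ((cmod (r x))\<^sup>2 + (cmod (s x))\<^sup>2) / t" for x
  have iu: "set_integrable lborel {0..L} (\<lambda>x. (cmod (u x))\<^sup>2)" using L2_sq[OF wd_L2v[OF u]] .
  have iv: "set_integrable lborel {0..L} (\<lambda>x. (cmod (v x))\<^sup>2)" using L2_sq[OF wd_L2v[OF v]] .
  have ir: "set_integrable lborel {0..L} (\<lambda>x. (cmod (r x))\<^sup>2)" using L2_sq[OF r] .
  have is': "set_integrable lborel {0..L} (\<lambda>x. (cmod (s x))\<^sup>2)" using L2_sq[OF s] .
  have iuv: "set_integrable lborel {0..L} (\<lambda>x. (cmod (u x))\<^sup>2 + (cmod (v x))\<^sup>2)" using iu iv by auto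
  have irs: "set_integrable lborel {0..L} (\<lambda>x. (cmod (r x))\<^sup>2 + (cmod (s x))\<^sup>2)" using ir is' by auto
  have iphi: "set_integrable lborel {0..L} \<phi>"
    unfolding \<phi>_def using iuv irs by auto
  have phi0: "\<And>x. 0 \<le> \<phi> x" unfolding \<phi>_def using t by auto
  define \<Phi> where "\<Phi> = (LINT x:{0..L}|lborel. \<phi> x)"
  have Phi_eq: "\<Phi> = t * (nsq L u + nsq L v) + (nsq L r + nsq L s) / t"
    unfolding \<Phi>_def \<phi>_def nsq_def using iu iv ir is' iuv irs by simp
  have iU: "set_integrable lborel {0..L} (\<lambda>x. Re (gu x * cnj (u x)))"
    by (rule sint_Re(1)[OF L2_prod[OF wd_L2[OF u] L2_cnj[OF wd_L2v[OF u]]]])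
  have iV: "set_integrable lborel {0..L} (\<lambda>x. Re (gv x * cnj (v x)))"
    by (rule sint_Re(1)[OF L2_prod[OF wd_L2[OF v] L2_cnj[OF wd_L2v[OF v]]]])
  have E: "(cmod (u x))\<^sup>2 + (cmod (v x))\<^sup>2 \<le> \<Phi>" if x: "x \<in> {0..L}" for x
  proof -
    have sub: "{0..x} \<subseteq> {0..L}" using x by auto
    have "set_integrable lborel {0..x} (\<lambda>t. Re (gu t * cnj (u t)))"
      by (rule set_integrable_subset[OF iU _ sub]) simp
    then have iU': "set_integrable lborel {0..x} (\<lambda>t. 2 * Re (gu t * cnj (u t)))"
      by (intro set_integrable_mult_right)
    have "set_integrable lborel {0..x} (\<lambda>t. Re (gv t * cnj (v t)))"
      by (rule set_integrable_subset[OF iV _ sub]) simp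
    then have iV': "set_integrable lborel {0..x} (\<lambda>t. 2 * Re (gv t * cnj (v t)))"
      by (intro set_integrable_mult_right)
    have iphi': "set_integrable lborel {0..x} \<phi>" using set_integrable_subset[OF iphi _ sub] by auto
    have "(cmod (u x))\<^sup>2 + (cmod (v x))\<^sup>2
        = (LINT t:{0..x}|lborel. 2 * Re (gu t * cnj (u t))) + (LINT t:{0..x}|lborel. 2 * Re (gv t * cnj (v t)))"
      using sq_rep[OF u u0 x] sq_rep[OF v v0 x] by simp
    also have "\<dots> = (LINT t:{0..x}|lborel. 2 * Re (gu t * cnj (u t)) + 2 * Re (gv t * cnj (v t)))"
      using iU' iV' by simp
    also have "\<dots> \<le> (LINT t:{0..x}|lborel. \<phi> t)"
    proof (rule set_integral_mono)
      show "set_integrable lborel {0..x} (\<lambda>t. 2 * Re (gu t * cnj (u t)) + 2 * Re (gv t * cnj (v t)))"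
        using iU' iV' by auto
      show "set_integrable lborel {0..x} \<phi>" by (rule iphi')
      fix y assume y: "y \<in> {0..x}"
      then have yL: "y \<in> {0..L}" using sub by auto
      have a1: "2 * (cmod (r y) * cmod (u y)) \<le> t * (cmod (u y))\<^sup>2 + (cmod (r y))\<^sup>2 / t"
        using amgm_t[OF t, of "cmod (u y)" "cmod (r y)"] by (simp add: mult.commute)
      have a2: "2 * (cmod (s y) * cmod (v y)) \<le> t * (cmod (v y))\<^sup>2 + (cmod (s y))\<^sup>2 / t"
        using amgm_t[OF t, of "cmod (v y)" "cmod (s y)"] by (simp add: mult.commute)
      have "2 * Re (gu y * cnj (u y)) + 2 * Re (gv y * cnj (v y))
          \<le> 2 * (cmod (r y) * cmod (u y)) + 2 * (cmod (s y) * cmod (v y))"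
        using pw[OF yL] by simp
      also have "\<dots> \<le> \<phi> y" using a1 a2 unfolding \<phi>_def by (simp add: add_divide_distrib distrib_left)
      finally show "2 * Re (gu y * cnj (u y)) + 2 * Re (gv y * cnj (v y)) \<le> \<phi> y" .
    qed
    also have "\<dots> \<le> \<Phi>" unfolding \<Phi>_def by (rule sint_mono_sub[OF iphi phi0 x])
    finally show ?thesis .
  qed
  have "nsq L u + nsq L v = (LINT x:{0..L}|lborel. (cmod (u x))\<^sup>2 + (cmod (v x))\<^sup>2)"
    unfolding nsq_def using iu iv by simp
  also have "\<dots> \<le> (LINT x:{0..L}|lborel. \<Phi>)"
    by (rule set_integral_mono[OF iuv sint_const]) (rule E)
  also have "\<dots> = \<Phi> * L" using L by (simp add: sint_const_val)
  finally have N: "nsq L u + nsq L v \<le> (t * (nsq L u + nsq L v) + (nsq L r + nsq L s) / t) * L"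
    unfolding Phi_eq .
  have "t * L = 1/2" using L by (simp add: t_def)
  moreover have "L / t = 2 * L\<^sup>2" using L by (simp add: t_def power2_eq_square)
  moreover have "(t * (nsq L u + nsq L v) + (nsq L r + nsq L s) / t) * L
      = (t * L) * (nsq L u + nsq L v) + (nsq L r + nsq L s) * (L / t)"
    using t by (simp add: field_simps)
  ultimately have "(t * (nsq L u + nsq L v) + (nsq L r + nsq L s) / t) * L
      = (nsq L u + nsq L v) / 2 + 2 * L\<^sup>2 * (nsq L r + nsq L s)"
    by simp
  with N have "nsq L u + nsq L v \<le> (nsq L u + nsq L v) / 2 + 2 * (L\<^sup>2 * (nsq L r + nsq L s))"
    by (simp add: mult.assoc)
  then have "nsq L u + nsq L v \<le> 4 * (L\<^sup>2 * (nsq L r + nsq L s))" by (rule half_aux)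
  then show ?thesis by (simp add: mult.assoc)
qed

lemma nsq_add2:
  assumes "L2 L p" "L2 L q"
  shows "nsq L (\<lambda>x. p x + q x) \<le> 2 * nsq L p + 2 * nsq L q"
proof -
  have "nsq L (\<lambda>x. p x + q x) \<le> (LINT x:{0..L}|lborel. 2 * (cmod (p x))\<^sup>2 + 2 * (cmod (q x))\<^sup>2)"
    unfolding nsq_def
  proof (rule set_integral_mono)
    show "set_integrable lborel {0..L} (\<lambda>x. (cmod (p x + q x))\<^sup>2)" using L2_sq[OF L2_add[OF assms]] .
    show "set_integrable lborel {0..L} (\<lambda>x. 2 * (cmod (p x))\<^sup>2 + 2 * (cmod (q x))\<^sup>2)"
      using L2_sq[OF assms(1)] L2_sq[OF assms(2)] by auto
    fix x
    have "cmod (p x + q x) \<le> cmod (p x) + cmod (q x)" by (rule norm_triangle_ineq)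
    then have "(cmod (p x + q x))\<^sup>2 \<le> (cmod (p x) + cmod (q x))\<^sup>2"
      by (simp add: power_mono)
    also have "\<dots> \<le> 2 * (cmod (p x))\<^sup>2 + 2 * (cmod (q x))\<^sup>2"
      using sum_squares_ge_zero[of "cmod (p x) - cmod (q x)" 0] by (simp add: power2_eq_square algebra_simps)
    finally show "(cmod (p x + q x))\<^sup>2 \<le> 2 * (cmod (p x))\<^sup>2 + 2 * (cmod (q x))\<^sup>2" .
  qed
  also have "\<dots> = 2 * nsq L p + 2 * nsq L q"
    unfolding nsq_def using L2_sq[OF assms(1)] L2_sq[OF assms(2)] by simp
  finally show ?thesis .
qed

lemma nsq_cmult: "nsq L (\<lambda>x. c * p x) = (cmod c)\<^sup>2 * nsq L p"
  unfolding nsq_def by (simp add: norm_mult power_mult_distrib)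

lemma nsq_zero: "nsq L (\<lambda>x. 0) = 0"
  unfolding nsq_def by simp

lemma wd_zero: "is_wderiv L (\<lambda>x. 0) (\<lambda>x. 0)"
  by (rule wd_I[OF L2_zero]) simp

lemma H10_D: "H10 L v g \<Longrightarrow> is_wderiv L v g" "H10 L v g \<Longrightarrow> v 0 = 0" "H10 L v g \<Longrightarrow> v L = 0"
  unfolding H10_def by auto

lemma coerc_pw:
  fixes u1 u1x u3 u5 u5x :: complex and l :: real
  shows "Re (u1x * cnj u1) + Re (u5x * cnj u5)
     \<le> cmod (u1x + u3 + of_real l * u5 - u3) * cmod u1 + cmod (u5x - of_real l * u1) * cmod u5"
proof -
  have "Re (u1x * cnj u1) + Re (u5x * cnj u5)
      = Re ((u1x + u3 + of_real l * u5 - u3) * cnj u1) + Re ((u5x - of_real l * u1) * cnj u5)"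
    by (simp add: algebra_simps)
  also have "\<dots> \<le> cmod ((u1x + u3 + of_real l * u5 - u3) * cnj u1) + cmod ((u5x - of_real l * u1) * cnj u5)"
    by (intro add_mono complex_Re_le_cmod)
  also have "\<dots> = cmod (u1x + u3 + of_real l * u5 - u3) * cmod u1 + cmod (u5x - of_real l * u1) * cmod u5"
    by (simp add: norm_mult)
  finally show ?thesis .
qed

lemma coerc:
  fixes l :: real
  assumes u1: "H10 L u1 u1x" and u3: "H10 L u3 u3x" and u5: "H10 L u5 u5x" and L: "L > 0"
  defines "P \<equiv> nsq L (\<lambda>x. u1x x + u3 x + of_real l * u5 x) + nsq L u3x + nsq L (\<lambda>x. u5x x - of_real l * u1 x)"
  shows "nsq L u3 \<le> 4 * L\<^sup>2 * P"
    and "nsq L u1 + nsq L u5 \<le> 4 * L\<^sup>2 * (3 + 8 * L\<^sup>2) * P"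
    and "nsq L u3x \<le> P"
    and "nsq L u1x \<le> (2 * (2 + 8 * L\<^sup>2) + 2 * l\<^sup>2 * (4 * L\<^sup>2 * (3 + 8 * L\<^sup>2))) * P"
    and "nsq L u5x \<le> (2 + 2 * l\<^sup>2 * (4 * L\<^sup>2 * (3 + 8 * L\<^sup>2))) * P"
proof -
  note w1 = H10_D[OF u1] and w3 = H10_D[OF u3] and w5 = H10_D[OF u5]
  define A where "A = nsq L (\<lambda>x. u1x x + u3 x + of_real l * u5 x)"
  define B where "B = nsq L u3x"
  define C where "C = nsq L (\<lambda>x. u5x x - of_real l * u1 x)"
  have P: "P = A + B + C" unfolding P_def A_def B_def C_def ..
  have A0: "A \<ge> 0" "B \<ge> 0" "C \<ge> 0" unfolding A_def B_def C_def by (simp_all add: nsq_nonneg)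
  have Lu1: "L2 L u1" "L2 L u1x" using wd_L2v[OF w1(1)] wd_L2[OF w1(1)] .
  have Lu3: "L2 L u3" "L2 L u3x" using wd_L2v[OF w3(1)] wd_L2[OF w3(1)] .
  have Lu5: "L2 L u5" "L2 L u5x" using wd_L2v[OF w5(1)] wd_L2[OF w5(1)] .
  have s1: "nsq L u3 \<le> 4 * L\<^sup>2 * B"
  proof -
    have "nsq L u3 + nsq L (\<lambda>x. 0) \<le> 4 * L\<^sup>2 * (nsq L u3x + nsq L (\<lambda>x. 0))"
    proof (rule poinc[OF w3(1) w3(2) wd_zero _ L Lu3(2) L2_zero])
      fix x
      have "Re (u3x x * cnj (u3 x)) \<le> cmod (u3x x * cnj (u3 x))" by (rule complex_Re_le_cmod)
      then show "Re (u3x x * cnj (u3 x)) + Re (0 * cnj 0) \<le> cmod (u3x x) * cmod (u3 x) + cmod 0 * cmod 0"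
        by (simp add: norm_mult)
    qed simp
    then show ?thesis by (simp add: nsq_zero B_def)
  qed
  have BP: "A \<le> P" "B \<le> P" "C \<le> P" using A0 P by linarith+
  have LB: "L\<^sup>2 * B \<le> L\<^sup>2 * P" by (rule mult_left_mono[OF BP(2)]) simp
  show "nsq L u3 \<le> 4 * L\<^sup>2 * P"
    using s1 LB by (simp add: mult.assoc)
  define r1 where "r1 x = u1x x + u3 x + of_real l * u5 x - u3 x" for x
  define r5 where "r5 x = u5x x - of_real l * u1 x" for x
  have Lw: "L2 L (\<lambda>x. u1x x + u3 x + of_real l * u5 x)"
    by (intro L2_add Lu1 Lu3 L2_cmult Lu5)
  have Lr1: "L2 L r1" unfolding r1_def by (intro L2_diff Lw Lu3)
  have Lr5: "L2 L r5" unfolding r5_def by (intro L2_diff L2_cmult Lu1 Lu5)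
  have s2: "nsq L r1 \<le> 2 * A + 8 * L\<^sup>2 * B"
  proof -
    have "nsq L r1 \<le> 2 * A + 2 * nsq L (\<lambda>x. - u3 x)"
      using nsq_add2[OF Lw L2_uminus[OF Lu3(1)]] unfolding r1_def A_def by simp
    also have "nsq L (\<lambda>x. - u3 x) = nsq L u3" using nsq_cmult[of L "-1" u3] by simp
    finally show ?thesis using s1 by simp
  qed
  have s3: "nsq L u1 + nsq L u5 \<le> 4 * L\<^sup>2 * (nsq L r1 + C)"
  proof -
    have "nsq L u1 + nsq L u5 \<le> 4 * L\<^sup>2 * (nsq L r1 + nsq L r5)"
      by (rule poinc[OF w1(1) w1(2) w5(1) w5(2) L Lr1 Lr5])
         (unfold r1_def r5_def, rule coerc_pw)
    moreover have "r5 = (\<lambda>x. u5x x - of_real l * u1 x)" by (auto simp: r5_def fun_eq_iff)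
    ultimately show ?thesis by (simp add: C_def)
  qed
  have s3': "nsq L u1 + nsq L u5 \<le> 4 * L\<^sup>2 * (3 + 8 * L\<^sup>2) * P"
  proof -
    have e1: "(3 + 8 * L\<^sup>2) * P = 3 * P + 8 * (L\<^sup>2 * P)" by (simp add: algebra_simps)
    have e2: "8 * L\<^sup>2 * B = 8 * (L\<^sup>2 * B)" by simp
    have "nsq L r1 + C \<le> (3 + 8 * L\<^sup>2) * P"
      unfolding e1 using s2 BP LB unfolding e2 by linarith
    then have "4 * L\<^sup>2 * (nsq L r1 + C) \<le> 4 * L\<^sup>2 * ((3 + 8 * L\<^sup>2) * P)"
      by (intro mult_left_mono) auto
    with s3 show ?thesis by (simp add: mult.assoc)
  qed
  then show "nsq L u1 + nsq L u5 \<le> 4 * L\<^sup>2 * (3 + 8 * L\<^sup>2) * P" .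
  show "nsq L u3x \<le> P" using A0 P by (simp add: B_def)
  have u1x_eq: "u1x = (\<lambda>x. r1 x + (- of_real l) * u5 x)" by (auto simp: r1_def fun_eq_iff)
  have u5x_eq: "u5x = (\<lambda>x. r5 x + of_real l * u1 x)" by (auto simp: r5_def fun_eq_iff)
  have r5_eq: "r5 = (\<lambda>x. u5x x - of_real l * u1 x)" by (auto simp: r5_def fun_eq_iff)
  have s4: "nsq L u1x \<le> 2 * nsq L r1 + 2 * l\<^sup>2 * nsq L u5"
    using nsq_add2[OF Lr1 L2_cmult[OF Lu5(1), of "- of_real l"]] unfolding u1x_eq[symmetric] nsq_cmult
    by simp
  have s5: "nsq L u5x \<le> 2 * C + 2 * l\<^sup>2 * nsq L u1"
    using nsq_add2[OF Lr5 L2_cmult[OF Lu1(1), of "of_real l"]] unfolding u5x_eq[symmetric] nsq_cmult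
    by (simp add: C_def r5_eq)
  have n1: "nsq L u1 \<le> 4 * L\<^sup>2 * (3 + 8 * L\<^sup>2) * P" "nsq L u5 \<le> 4 * L\<^sup>2 * (3 + 8 * L\<^sup>2) * P"
    using s3' nsq_nonneg[of L u1] nsq_nonneg[of L u5] by linarith+
  have "2 * l\<^sup>2 * nsq L u5 \<le> 2 * l\<^sup>2 * (4 * L\<^sup>2 * (3 + 8 * L\<^sup>2) * P)"
    using n1(2) by (intro mult_left_mono) auto
  moreover have "2 * nsq L r1 \<le> 2 * (2 + 8 * L\<^sup>2) * P"
  proof -
    have e1: "2 * (2 + 8 * L\<^sup>2) * P = 4 * P + 16 * (L\<^sup>2 * P)" by (simp add: algebra_simps)
    have e2: "8 * L\<^sup>2 * B = 8 * (L\<^sup>2 * B)" by simp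
    show ?thesis unfolding e1 using s2 BP LB unfolding e2 by linarith
  qed
  ultimately show "nsq L u1x \<le> (2 * (2 + 8 * L\<^sup>2) + 2 * l\<^sup>2 * (4 * L\<^sup>2 * (3 + 8 * L\<^sup>2))) * P"
    using s4 by (simp add: algebra_simps)
  have "2 * l\<^sup>2 * nsq L u1 \<le> 2 * l\<^sup>2 * (4 * L\<^sup>2 * (3 + 8 * L\<^sup>2) * P)"
    using n1(1) by (intro mult_left_mono) auto
  moreover have "2 * C \<le> 2 * P" using A0 P by simp
  ultimately show "nsq L u5x \<le> (2 + 2 * l\<^sup>2 * (4 * L\<^sup>2 * (3 + 8 * L\<^sup>2))) * P"
    using s5 by (simp add: algebra_simps)
qed

lemma cmod_mult_self': "cmod a * cmod a = Re a * Re a + Im a * Im a"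
  using cmod_power2[of a] by (simp add: power2_eq_square)

lemma ptw_identity:
  fixes lam h hd a r1 r2 k1 k2 k3 l :: real
    and v1 v1x v1xx v2 v2x v3 v3x v3xx v4 v4x v5 v5x v5xx v6 v6x G2 G4 G6 :: complex
  assumes G2: "G2 = \<i> * lam * r1 * v2 - k1 * (v1xx + v3x + l * v5x) - l * k3 * (v5x - l * v1)"
    and G4: "G4 = \<i> * lam * r2 * v4 - k2 * v3xx + k1 * (v1x + v3 + l * v5)"
    and G6: "G6 = \<i> * lam * r1 * v6 - k3 * (v5xx - l * v1x) + l * k1 * (v1x + v3 + l * v5) + a * v6"
  shows "hd * (r1 * (cmod (lam * v1))\<^sup>2 + k1 * (cmod v1x)\<^sup>2 + r2 * (cmod (lam * v3))\<^sup>2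
             + k2 * (cmod v3x)\<^sup>2 + r1 * (cmod (lam * v5))\<^sup>2 + k3 * (cmod v5x)\<^sup>2)
   = r1 * (hd * (cmod v2)\<^sup>2 + 2 * h * Re (v2x * cnj v2))
      + r2 * (hd * (cmod v4)\<^sup>2 + 2 * h * Re (v4x * cnj v4))
      + r1 * (hd * (cmod v6)\<^sup>2 + 2 * h * Re (v6x * cnj v6))
      + k1 * (hd * (cmod v1x)\<^sup>2 + 2 * h * Re (v1xx * cnj v1x))
      + k2 * (hd * (cmod v3x)\<^sup>2 + 2 * h * Re (v3xx * cnj v3x))
      + k3 * (hd * (cmod v5x)\<^sup>2 + 2 * h * Re (v5xx * cnj v5x))
   + Re (complex_of_real (2 * h) * G2 * cnj v1x
       + complex_of_real (2 * h) * G4 * cnj v3x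
       + complex_of_real (2 * h) * G6 * cnj v5x
       + complex_of_real (2 * h * r1) * v2 * cnj (\<i> * lam * v1x - v2x)
       + complex_of_real (2 * h * r2) * v4 * cnj (\<i> * lam * v3x - v4x)
       + complex_of_real (2 * h * r1) * v6 * cnj (\<i> * lam * v5x - v6x)
       + complex_of_real (- 2 * h * l\<^sup>2 * k3) * v1 * cnj v1x
       + complex_of_real (- 2 * h * k1) * v3 * cnj v3x
       + complex_of_real (- 2 * h * k1 * l) * v5 * cnj v3x
       + complex_of_real (- 2 * h * l * k1) * v3 * cnj v5x
       + complex_of_real (- 2 * h * l\<^sup>2 * k1) * v5 * cnj v5x
       + complex_of_real (- 2 * h) * (a * v6) * cnj v5x
       + complex_of_real (hd * r1) * (\<i> * lam * v1 - v2) * cnj (\<i> * lam * v1 + v2)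
       + complex_of_real (hd * r2) * (\<i> * lam * v3 - v4) * cnj (\<i> * lam * v3 + v4)
       + complex_of_real (hd * r1) * (\<i> * lam * v5 - v6) * cnj (\<i> * lam * v5 + v6))"
  unfolding G2 G4 G6
  by (simp add: power2_eq_square cmod_mult_self' algebra_simps)

lemma diss_identity:
  fixes lam a r1 r2 k1 k2 k3 l :: real
    and v1 v1x v1xx v2 v2x v3 v3x v3xx v4 v4x v5 v5x v5xx v6 v6x G2 G4 G6 :: complex
  assumes G2: "G2 = \<i> * lam * r1 * v2 - k1 * (v1xx + v3x + l * v5x) - l * k3 * (v5x - l * v1)"
    and G4: "G4 = \<i> * lam * r2 * v4 - k2 * v3xx + k1 * (v1x + v3 + l * v5)"
    and G6: "G6 = \<i> * lam * r1 * v6 - k3 * (v5xx - l * v1x) + l * k1 * (v1x + v3 + l * v5) + a * v6"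
  shows "a * (cmod v6)\<^sup>2 = k1 * (Re ((v1xx + v3x + l * v5x) * cnj v2) + Re ((v1x + v3 + l * v5) * cnj v2x))
      + k2 * (Re (v3xx * cnj v4) + Re (v3x * cnj v4x))
      + k3 * (Re ((v5xx - l * v1x) * cnj v6) + Re ((v5x - l * v1) * cnj v6x))
    + Re (complex_of_real k1 * ((\<i> * lam * v1x - v2x) + (\<i> * lam * v3 - v4) + l * (\<i> * lam * v5 - v6)) * cnj (v1x + v3 + l * v5)
      + complex_of_real 1 * G2 * cnj v2 + complex_of_real k2 * (\<i> * lam * v3x - v4x) * cnj v3x
      + complex_of_real 1 * G4 * cnj v4
      + complex_of_real k3 * ((\<i> * lam * v5x - v6x) - l * (\<i> * lam * v1 - v2)) * cnj (v5x - l * v1)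
      + complex_of_real 1 * G6 * cnj v6)"
  unfolding G2 G4 G6
  by (simp add: power2_eq_square cmod_mult_self' algebra_simps)


lemma Gform2:
  fixes lam r k1 k3 l :: real and v1 v1xx v2 v3x v5x :: complex
  assumes "r \<noteq> 0"
  shows "complex_of_real r * (\<i> * complex_of_real lam * v2 - (complex_of_real (k1 / r) * (v1xx + v3x + complex_of_real l * v5x) + complex_of_real (l * k3 / r) * (v5x - complex_of_real l * v1)))
     = \<i> * lam * r * v2 - k1 * (v1xx + v3x + l * v5x) - l * k3 * (v5x - l * v1)"
  using assms by (simp add: field_simps)

lemma Gform4:
  fixes lam r2 k1 k2 l :: real and v1x v3 v3xx v4 v5 :: complex
  assumes "r2 \<noteq> 0"
  shows "complex_of_real r2 * (\<i> * complex_of_real lam * v4 - (complex_of_real (k2 / r2) * v3xx - complex_of_real (k1 / r2) * (v1x + v3 + complex_of_real l * v5)))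
     = \<i> * lam * r2 * v4 - k2 * v3xx + k1 * (v1x + v3 + l * v5)"
  using assms by (simp add: field_simps)

lemma Gform6:
  fixes lam r1 k1 k3 l a :: real and v1x v3 v5 v5xx v6 :: complex
  assumes "r1 \<noteq> 0"
  shows "complex_of_real r1 * (\<i> * complex_of_real lam * v6 - (complex_of_real (k3 / r1) * (v5xx - complex_of_real l * v1x) - complex_of_real (l * k1 / r1) * (v1x + v3 + complex_of_real l * v5) - complex_of_real (a / r1) * v6))
     = \<i> * lam * r1 * v6 - k3 * (v5xx - l * v1x) + l * k1 * (v1x + v3 + l * v5) + a * v6"
  using assms by (simp add: field_simps)

lemma Hnorm_scale:
  fixes c :: real
  shows "Hnorm rho1 rho2 k1 k2 k3 l L (\<lambda>x. of_real c * p1 x) (\<lambda>x. of_real c * p1x x) (\<lambda>x. of_real c * p2 x)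
     (\<lambda>x. of_real c * p3 x) (\<lambda>x. of_real c * p3x x) (\<lambda>x. of_real c * p4 x)
     (\<lambda>x. of_real c * p5 x) (\<lambda>x. of_real c * p5x x) (\<lambda>x. of_real c * p6 x)
   = \<bar>c\<bar> * Hnorm rho1 rho2 k1 k2 k3 l L p1 p1x p2 p3 p3x p4 p5 p5x p6"
proof -
  have e: "k1 * (cmod (of_real c * p1x x + of_real c * p3 x + of_real l * (of_real c * p5 x)))\<^sup>2 + rho1 * (cmod (of_real c * p2 x))\<^sup>2
      + k2 * (cmod (of_real c * p3x x))\<^sup>2 + rho2 * (cmod (of_real c * p4 x))\<^sup>2
      + k3 * (cmod (of_real c * p5x x - of_real l * (of_real c * p1 x)))\<^sup>2 + rho1 * (cmod (of_real c * p6 x))\<^sup>2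
    = c\<^sup>2 * (k1 * (cmod (p1x x + p3 x + of_real l * p5 x))\<^sup>2 + rho1 * (cmod (p2 x))\<^sup>2
      + k2 * (cmod (p3x x))\<^sup>2 + rho2 * (cmod (p4 x))\<^sup>2
      + k3 * (cmod (p5x x - of_real l * p1 x))\<^sup>2 + rho1 * (cmod (p6 x))\<^sup>2)" for x
  proof -
    have a: "of_real c * p1x x + of_real c * p3 x + of_real l * (of_real c * p5 x) = of_real c * (p1x x + p3 x + of_real l * p5 x)"
      by (simp add: algebra_simps)
    have b: "of_real c * p5x x - of_real l * (of_real c * p1 x) = of_real c * (p5x x - of_real l * p1 x)"
      by (simp add: algebra_simps)
    show ?thesis unfolding a b by (simp only: norm_mult power_mult_distrib norm_of_real power2_abs) (simp add: algebra_simps)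
  qed
  show ?thesis unfolding Hnorm_def e set_integral_mult_right
    by (simp add: real_sqrt_mult)
qed

lemma Hnorm_eq:
  assumes "L2 L p1" "L2 L p1x" "L2 L p2" "L2 L p3" "L2 L p3x" "L2 L p4" "L2 L p5" "L2 L p5x" "L2 L p6"
  shows "Hnorm rho1 rho2 k1 k2 k3 l L p1 p1x p2 p3 p3x p4 p5 p5x p6
    = sqrt (k1 * nsq L (\<lambda>x. p1x x + p3 x + of_real l * p5 x) + rho1 * nsq L p2 + k2 * nsq L p3x
          + rho2 * nsq L p4 + k3 * nsq L (\<lambda>x. p5x x - of_real l * p1 x) + rho1 * nsq L p6)"
proof -
  have i1: "set_integrable lborel {0..L} (\<lambda>x. (cmod (p1x x + p3 x + of_real l * p5 x))\<^sup>2)"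
    by (intro L2_sq L2_add L2_cmult assms)
  have i5: "set_integrable lborel {0..L} (\<lambda>x. (cmod (p5x x - of_real l * p1 x))\<^sup>2)"
    by (intro L2_sq L2_diff L2_cmult assms)
  note i = i1 i5 L2_sq[OF assms(3)] L2_sq[OF assms(5)] L2_sq[OF assms(6)] L2_sq[OF assms(9)]
  show ?thesis unfolding Hnorm_def nsq_def using i by simp
qed

lemma lim_pq:
  fixes P Q :: "nat \<Rightarrow> real \<Rightarrow> complex"
  assumes "\<And>n. L2 L (P n)" "\<And>n. L2 L (Q n)" "(\<lambda>n. nsq L (P n)) \<longlonglongrightarrow> 0" "Bseq (\<lambda>n. nsq L (Q n))"
  shows "(\<lambda>n. LINT x:{0..L}|lborel. cmod (P n x) * cmod (Q n x)) \<longlonglongrightarrow> 0"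
proof -
  obtain K where K: "K > 0" "\<And>n. norm (nsq L (Q n)) \<le> K" using assms(4) unfolding Bseq_def by blast
  have up: "(\<lambda>n. sqrt (nsq L (P n)) * sqrt K) \<longlonglongrightarrow> 0"
    using tendsto_mult[OF tendsto_real_sqrt[OF assms(3)] tendsto_const[of "sqrt K"]] by simp
  show ?thesis
  proof (rule tendsto_sandwich[OF _ _ tendsto_const up])
    show "\<forall>\<^sub>F n in sequentially. 0 \<le> (LINT x:{0..L}|lborel. cmod (P n x) * cmod (Q n x))"
      by (intro always_eventually allI) (simp add: set_lebesgue_integral_def integral_nonneg_AE)
    show "\<forall>\<^sub>F n in sequentially. (LINT x:{0..L}|lborel. cmod (P n x) * cmod (Q n x)) \<le> sqrt (nsq L (P n)) * sqrt K"
    proof (intro always_eventually allI)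
      fix n
      have "sqrt (nsq L (Q n)) \<le> sqrt K" using K(2)[of n] nsq_nonneg[of L "Q n"] by simp
      then have "sqrt (nsq L (P n)) * sqrt (nsq L (Q n)) \<le> sqrt (nsq L (P n)) * sqrt K"
        using nsq_nonneg[of L "P n"] by (intro mult_left_mono) auto
      then show "(LINT x:{0..L}|lborel. cmod (P n x) * cmod (Q n x)) \<le> sqrt (nsq L (P n)) * sqrt K"
        using CS[OF assms(1)[of n] assms(2)[of n]] by linarith
    qed
  qed
qed

lemma lim_pq':
  fixes P Q :: "nat \<Rightarrow> real \<Rightarrow> complex"
  assumes "\<And>n. L2 L (P n)" "\<And>n. L2 L (Q n)" "(\<lambda>n. nsq L (Q n)) \<longlonglongrightarrow> 0" "Bseq (\<lambda>n. nsq L (P n))"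
  shows "(\<lambda>n. LINT x:{0..L}|lborel. cmod (P n x) * cmod (Q n x)) \<longlonglongrightarrow> 0"
  using lim_pq[OF assms(2,1,3,4)] by (simp add: mult.commute)

lemma tb:
  fixes b P Q :: "real \<Rightarrow> complex"
  assumes P: "L2 L P" and Q: "L2 L Q" and b: "set_borel_measurable lborel {0..L} b"
    and B: "\<And>x. x \<in> {0..L} \<Longrightarrow> cmod (b x) \<le> B"
  shows "set_integrable lborel {0..L} (\<lambda>x. b x * P x * cnj (Q x))"
    and "cmod (LINT x:{0..L}|lborel. b x * P x * cnj (Q x)) \<le> B * (LINT x:{0..L}|lborel. cmod (P x) * cmod (Q x))"
proof -
  have bP: "L2 L (\<lambda>x. b x * P x)" by (rule L2_bdd[OF P b B])
  show i: "set_integrable lborel {0..L} (\<lambda>x. b x * P x * cnj (Q x))"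
    using L2_prod[OF bP L2_cnj[OF Q]] .
  have "cmod (LINT x:{0..L}|lborel. b x * P x * cnj (Q x)) \<le> (LINT x:{0..L}|lborel. cmod (b x * P x * cnj (Q x)))"
  proof -
    have "norm (integral\<^sup>L lborel (\<lambda>x. indicator {0..L} x *\<^sub>R (b x * P x * cnj (Q x))))
        \<le> integral\<^sup>L lborel (\<lambda>x. norm (indicator {0..L} x *\<^sub>R (b x * P x * cnj (Q x))))"
      by (rule integral_norm_bound)
    also have "(\<lambda>x. norm (indicator {0..L} x *\<^sub>R (b x * P x * cnj (Q x)))) = (\<lambda>x. indicator {0..L} x *\<^sub>R cmod (b x * P x * cnj (Q x)))"
      by (auto simp: indicator_def fun_eq_iff)
    finally show ?thesis unfolding set_lebesgue_integral_def .
  qed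
  also have "\<dots> \<le> (LINT x:{0..L}|lborel. B * (cmod (P x) * cmod (Q x)))"
  proof (rule set_integral_mono)
    show "set_integrable lborel {0..L} (\<lambda>x. cmod (b x * P x * cnj (Q x)))" by (rule sint_cmod[OF i])
    show "set_integrable lborel {0..L} (\<lambda>x. B * (cmod (P x) * cmod (Q x)))"
      using L2_prod_norm[OF P Q] by auto
    fix x assume x: "x \<in> {0..L}"
    show "cmod (b x * P x * cnj (Q x)) \<le> B * (cmod (P x) * cmod (Q x))"
      using B[OF x] by (simp add: norm_mult mult_right_mono mult.assoc)
  qed
  also have "\<dots> = B * (LINT x:{0..L}|lborel. cmod (P x) * cmod (Q x))" by simp
  finally show "cmod (LINT x:{0..L}|lborel. b x * P x * cnj (Q x)) \<le> B * (LINT x:{0..L}|lborel. cmod (P x) * cmod (Q x))" .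
qed


lemma energy_int:
  fixes h h' :: "real \<Rightarrow> real"
  assumes hd: "\<forall>x\<in>{0..L}. (h has_real_derivative h' x) (at x within {0..L})"
    and hc: "continuous_on {0..L} h'" and v: "is_wderiv L v g"
  shows "set_integrable lborel {0..L} (\<lambda>x. h' x * (cmod (v x))\<^sup>2 + 2 * h x * Re (g x * cnj (v x)))"
proof -
  have w: "is_wderiv L (\<lambda>x. complex_of_real (h x) * v x * cnj (v x))
     (\<lambda>x. (complex_of_real (h' x) * v x + complex_of_real (h x) * g x) * cnj (v x) + complex_of_real (h x) * v x * cnj (g x))"
    using wd_mult[OF wd_mult[OF wd_of_real[OF hd hc] v] wd_cnj[OF v]] by simp
  have "set_integrable lborel {0..L} (\<lambda>x. Re ((complex_of_real (h' x) * v x + complex_of_real (h x) * g x) * cnj (v x) + complex_of_real (h x) * v x * cnj (g x)))"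
    by (rule sint_Re(1)[OF L2_int[OF wd_L2[OF w]]])
  then show ?thesis by (simp only: re_aux1)
qed

lemma gamma_int:
  assumes v: "is_wderiv L v gv" and w: "is_wderiv L w gw"
  shows "set_integrable lborel {0..L} (\<lambda>x. Re (gw x * cnj (v x)) + Re (w x * cnj (gv x)))"
proof -
  have a: "set_integrable lborel {0..L} (\<lambda>x. Re (gw x * cnj (v x)))"
    by (rule sint_Re(1)[OF L2_prod[OF wd_L2[OF w] L2_cnj[OF wd_L2v[OF v]]]])
  have b: "set_integrable lborel {0..L} (\<lambda>x. Re (w x * cnj (gv x)))"
    by (rule sint_Re(1)[OF L2_prod[OF wd_L2v[OF w] L2_cnj[OF wd_L2[OF v]]]])
  show ?thesis using a b by (rule set_integral_add(1))
qed

lemma cont_b: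
  fixes b :: "real \<Rightarrow> 'a::real_normed_vector"
  assumes "continuous_on {0..L} b"
  shows "set_borel_measurable lborel {0..L} b" "\<exists>B. \<forall>x\<in>{0..L}. norm (b x) \<le> B"
proof -
  show "set_borel_measurable lborel {0..L} b"
    using borel_measurable_continuous_on_indicator[OF _ assms] unfolding set_borel_measurable_def
    by simp
  have "compact (b ` {0..L})" by (rule compact_continuous_image[OF assms]) simp
  then have "bounded (b ` {0..L})" by (rule compact_imp_bounded)
  then show "\<exists>B. \<forall>x\<in>{0..L}. norm (b x) \<le> B" unfolding bounded_iff by blast
qed

lemma lim0_bound:
  fixes f g :: "nat \<Rightarrow> real"
  assumes "\<And>n. 0 \<le> f n" "\<And>n. f n \<le> c * g n" "g \<longlonglongrightarrow> 0"
  shows "f \<longlonglongrightarrow> 0"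
proof (rule tendsto_sandwich[OF _ _ tendsto_const])
  show "\<forall>\<^sub>F n in sequentially. 0 \<le> f n" using assms(1) by simp
  show "\<forall>\<^sub>F n in sequentially. f n \<le> c * g n" using assms(2) by simp
  show "(\<lambda>n. c * g n) \<longlonglongrightarrow> 0" using tendsto_mult[OF tendsto_const[of c] assms(3)] by simp
qed

lemma Bseq_le:
  fixes f g :: "nat \<Rightarrow> real"
  assumes "Bseq g" "\<And>n. 0 \<le> f n" "\<And>n. f n \<le> g n"
  shows "Bseq f"
proof -
  obtain K where K: "\<And>n. norm (g n) \<le> K" using assms(1) unfolding Bseq_def by blast
  show ?thesis
  proof (rule BseqI')
    fix n show "norm (f n) \<le> K" using K[of n] assms(2,3)[of n] by simp
  qed
qed

lemma Bseq_constI: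
  fixes f :: "nat \<Rightarrow> real"
  assumes "\<And>n. 0 \<le> f n" "\<And>n. f n \<le> K"
  shows "Bseq f"
  by (rule BseqI'[where K=K]) (use assms in simp)

lemma norm_add_mono:
  fixes A B :: complex
  shows "cmod A \<le> X \<Longrightarrow> cmod B \<le> Y \<Longrightarrow> cmod (A + B) \<le> X + Y"
  by (rule order_trans[OF norm_triangle_ineq]) simp

lemma a_facts:
  fixes a :: "real \<Rightarrow> real"
  assumes beta: "0 < beta" "beta < L" and a0: "a0 > 0"
    and a_in: "\<forall>x\<in>{0<..<beta}. a x = a0" and a_out: "\<forall>x\<in>{beta<..<L}. a x = 0"
  shows "set_borel_measurable lborel {0..L} a"
    and "\<And>x. x \<in> {0..L} \<Longrightarrow> \<bar>a x\<bar> \<le> a0 + \<bar>a 0\<bar> + \<bar>a beta\<bar> + \<bar>a L\<bar>"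
    and "AE x in lborel. x \<in> {0..L} \<longrightarrow> 0 \<le> a x \<and> a x \<le> a0"
proof -
  have eq: "(\<lambda>x. indicator {0..L} x *\<^sub>R a x) = (\<lambda>x. a0 * indicator {0<..<beta} x + a 0 * indicator {0} x
      + a beta * indicator {beta} x + a L * indicator {L} x)"
  proof
    fix x
    consider "x \<in> {0<..<beta}" | "x = 0" | "x = beta" | "x = L" | "x \<in> {beta<..<L}" | "x \<notin> {0..L}"
      using beta by force
    then show "indicator {0..L} x *\<^sub>R a x = a0 * indicator {0<..<beta} x + a 0 * indicator {0} x
      + a beta * indicator {beta} x + a L * indicator {L} x"
    proof cases
      case 1 then show ?thesis using a_in beta by (auto simp: indicator_def)
    next
      case 2 then show ?thesis using beta by (auto simp: indicator_def)
    next
      case 3 then show ?thesis using beta by (auto simp: indicator_def)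
    next
      case 4 then show ?thesis using beta by (auto simp: indicator_def)
    next
      case 5 then show ?thesis using a_out beta by (auto simp: indicator_def)
    next
      case 6 then show ?thesis using beta by (auto simp: indicator_def)
    qed
  qed
  show "set_borel_measurable lborel {0..L} a"
    unfolding set_borel_measurable_def eq by measurable
  show "\<bar>a x\<bar> \<le> a0 + \<bar>a 0\<bar> + \<bar>a beta\<bar> + \<bar>a L\<bar>" if x: "x \<in> {0..L}" for x
  proof -
    consider "x \<in> {0<..<beta}" | "x = 0" | "x = beta" | "x = L" | "x \<in> {beta<..<L}"
      using beta x by force
    then show ?thesis using a_in a_out a0 by cases auto
  qed
  show "AE x in lborel. x \<in> {0..L} \<longrightarrow> 0 \<le> a x \<and> a x \<le> a0"
    using AE_lborel_singleton[of 0] AE_lborel_singleton[of beta] AE_lborel_singleton[of L]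
  proof eventually_elim
    case (elim x)
    show ?case
    proof
      assume x: "x \<in> {0..L}"
      then have "x \<in> {0<..<beta} \<or> x \<in> {beta<..<L}" using elim by auto
      then show "0 \<le> a x \<and> a x \<le> a0" using a_in a_out a0 by auto
    qed
  qed
qed

lemma small_v:
  fixes lam :: "nat \<Rightarrow> real" and v q g :: "nat \<Rightarrow> real \<Rightarrow> complex"
  assumes nz: "\<And>n. lam n \<noteq> 0" and inf: "filterlim (\<lambda>n. \<bar>lam n\<bar>) at_top sequentially"
    and Lq: "\<And>n. L2 L (q n)" and Lg: "\<And>n. L2 L (g n)"
    and eq: "\<And>n x. g n x = \<i> * of_real (lam n) * v n x - q n x"
    and qb: "\<And>n. nsq L (q n) \<le> C" and gl: "(\<lambda>n. nsq L (g n)) \<longlonglongrightarrow> 0"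
  shows "(\<lambda>n. nsq L (v n)) \<longlonglongrightarrow> 0"
proof -
  have veq: "v n = (\<lambda>x. (- \<i> / of_real (lam n)) * (q n x + g n x))" for n
  proof
    fix x
    show "v n x = (- \<i> / of_real (lam n)) * (q n x + g n x)"
      unfolding eq using nz[of n] by (simp add: field_simps)
  qed
  have c: "(cmod (- \<i> / complex_of_real (lam n)))\<^sup>2 = (inverse \<bar>lam n\<bar>)\<^sup>2" for n
    by (simp add: norm_divide norm_mult norm_inverse divide_inverse)
  have bnd: "nsq L (v n) \<le> (inverse \<bar>lam n\<bar>)\<^sup>2 * (2 * C + 2 * nsq L (g n))" for n
  proof -
    have "nsq L (v n) = (inverse \<bar>lam n\<bar>)\<^sup>2 * nsq L (\<lambda>x. q n x + g n x)"
      by (subst veq) (simp only: nsq_cmult c)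
    also have "\<dots> \<le> (inverse \<bar>lam n\<bar>)\<^sup>2 * (2 * C + 2 * nsq L (g n))"
      using nsq_add2[OF Lq[of n] Lg[of n]] qb[of n] by (intro mult_left_mono) auto
    finally show ?thesis .
  qed
  have il: "(\<lambda>n. inverse \<bar>lam n\<bar>) \<longlonglongrightarrow> 0" by (rule tendsto_inverse_0_at_top[OF inf])
  have "(\<lambda>n. (inverse \<bar>lam n\<bar>)\<^sup>2 * (2 * C + 2 * nsq L (g n))) \<longlonglongrightarrow> 0\<^sup>2 * (2 * C + 2 * 0)"
    by (intro tendsto_intros il gl)
  then have up: "(\<lambda>n. (inverse \<bar>lam n\<bar>)\<^sup>2 * (2 * C + 2 * nsq L (g n))) \<longlonglongrightarrow> 0" by simp
  show ?thesis
    by (rule tendsto_sandwich[OF _ _ tendsto_const up]) (auto simp: nsq_nonneg bnd)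
qed

lemma q_bseq:
  fixes lam :: "nat \<Rightarrow> real" and v q g :: "nat \<Rightarrow> real \<Rightarrow> complex"
  assumes Lq: "\<And>n. L2 L (q n)" and Lg: "\<And>n. L2 L (g n)"
    and eq: "\<And>n x. g n x = \<i> * of_real (lam n) * v n x - q n x"
    and qb: "\<And>n. nsq L (q n) \<le> C" and gl: "(\<lambda>n. nsq L (g n)) \<longlonglongrightarrow> 0"
  shows "Bseq (\<lambda>n. nsq L (\<lambda>x. \<i> * of_real (lam n) * v n x + q n x))"
proof (rule Bseq_le)
  have "convergent (\<lambda>n. 8 * C + 2 * nsq L (g n))"
    unfolding convergent_def using tendsto_add[OF tendsto_const tendsto_mult[OF tendsto_const gl]] by blast
  then show "Bseq (\<lambda>n. 8 * C + 2 * nsq L (g n))" by (rule convergent_imp_Bseq)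
  fix n
  show "0 \<le> nsq L (\<lambda>x. \<i> * of_real (lam n) * v n x + q n x)" by (rule nsq_nonneg)
  have e: "(\<lambda>x. \<i> * of_real (lam n) * v n x + q n x) = (\<lambda>x. 2 * q n x + g n x)"
    by (rule ext) (simp add: eq)
  have "nsq L (\<lambda>x. 2 * q n x + g n x) \<le> 2 * nsq L (\<lambda>x. 2 * q n x) + 2 * nsq L (g n)"
    by (rule nsq_add2[OF L2_cmult[OF Lq] Lg])
  also have "nsq L (\<lambda>x. 2 * q n x) = 4 * nsq L (q n)" using nsq_cmult[of L 2 "q n"] by simp
  finally show "nsq L (\<lambda>x. \<i> * of_real (lam n) * v n x + q n x) \<le> 8 * C + 2 * nsq L (g n)"
    unfolding e using qb[of n] by simp
qed

lemma L2_q: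
  fixes c :: complex
  assumes "L2 L v" "L2 L q" shows "L2 L (\<lambda>x. c * v x + q x)"
  by (intro L2_add L2_cmult assms)

lemma sumI:
  fixes f g :: "real \<Rightarrow> complex"
  assumes "set_integrable lborel A f \<and> cmod (LINT x:A|lborel. f x) \<le> X"
    and "set_integrable lborel A g \<and> cmod (LINT x:A|lborel. g x) \<le> Y"
  shows "set_integrable lborel A (\<lambda>x. f x + g x) \<and> cmod (LINT x:A|lborel. f x + g x) \<le> X + Y"
proof -
  have i: "set_integrable lborel A f" "set_integrable lborel A g" using assms by auto
  have "(LINT x:A|lborel. f x + g x) = (LINT x:A|lborel. f x) + (LINT x:A|lborel. g x)"
    by (rule set_integral_add(2)[OF i])
  then show ?thesis using assms set_integral_add(1)[OF i] by (simp add: norm_add_mono)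
qed

lemma tbc:
  fixes b P Q :: "real \<Rightarrow> complex"
  assumes "L2 L P" "L2 L Q" "set_borel_measurable lborel {0..L} b" "\<And>x. x \<in> {0..L} \<Longrightarrow> cmod (b x) \<le> B"
  shows "set_integrable lborel {0..L} (\<lambda>x. b x * P x * cnj (Q x))
     \<and> cmod (LINT x:{0..L}|lborel. b x * P x * cnj (Q x)) \<le> B * (LINT x:{0..L}|lborel. cmod (P x) * cmod (Q x))"
  using tb[OF assms] by blast

lemma sumZ:
  fixes f g :: "real \<Rightarrow> real"
  assumes "set_integrable lborel A f \<and> (LINT x:A|lborel. f x) = 0"
    and "set_integrable lborel A g \<and> (LINT x:A|lborel. g x) = 0"
  shows "set_integrable lborel A (\<lambda>x. f x + g x) \<and> (LINT x:A|lborel. f x + g x) = 0"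
  using assms set_integral_add[of lborel A f g] by auto

lemma scaleZ:
  fixes f :: "real \<Rightarrow> real"
  assumes "set_integrable lborel A f \<and> (LINT x:A|lborel. f x) = 0"
  shows "set_integrable lborel A (\<lambda>x. c * f x) \<and> (LINT x:A|lborel. c * f x) = 0"
  using assms by auto

theorem mainTheorem13:
  fixes rho1 rho2 k1 k2 k3 l L beta a0 :: real
    and a :: "real \<Rightarrow> real"
    and ell :: nat
    and lam :: "nat \<Rightarrow> real"
    and v1 v2 v3 v4 v5 v6 :: "nat \<Rightarrow> real \<Rightarrow> complex"
    and v1x v2x v3x v4x v5x v6x v1xx v3xx v5xx :: "nat \<Rightarrow> real \<Rightarrow> complex"
  assumes pos: "rho1 > 0" "rho2 > 0" "k1 > 0" "k2 > 0" "k3 > 0" "l > 0" "L > 0"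
    and beta: "0 < beta" "beta < L"
    and a0: "a0 > 0"
    and a_in: "\<forall>x\<in>{0<..<beta}. a x = a0"
    and a_out: "\<forall>x\<in>{beta<..<L}. a x = 0"
    and hyp: "(k1 / rho1 = k2 / rho2 \<and> k1 = k3 \<and> ell = 0)
            \<or> (k1 / rho1 = k2 / rho2 \<and> k1 \<noteq> k3 \<and> ell = 2)
            \<or> (k1 / rho1 \<noteq> k2 / rho2 \<and> ell = 4)"
    and lam_nz: "\<forall>n. lam n \<noteq> 0"
    and lam_inf: "filterlim (\<lambda>n. \<bar>lam n\<bar>) at_top sequentially"
    and dom: "\<forall>n. H2H10 L (v1 n) (v1x n) (v1xx n) \<and> H10 L (v2 n) (v2x n)
                 \<and> H2H10 L (v3 n) (v3x n) (v3xx n) \<and> H10 L (v4 n) (v4x n)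
                 \<and> H2H10 L (v5 n) (v5x n) (v5xx n) \<and> H10 L (v6 n) (v6x n)"
    and unit: "\<forall>n. Hnorm rho1 rho2 k1 k2 k3 l L (v1 n) (v1x n) (v2 n) (v3 n) (v3x n) (v4 n)
                   (v5 n) (v5x n) (v6 n) = 1"
    and F_lim: "(\<lambda>n. Hnorm rho1 rho2 k1 k2 k3 l L
       (\<lambda>x. of_real (lam n ^ ell) * (\<i> * of_real (lam n) * v1 n x - v2 n x))
       (\<lambda>x. of_real (lam n ^ ell) * (\<i> * of_real (lam n) * v1x n x - v2x n x))
       (\<lambda>x. of_real (lam n ^ ell) * (\<i> * of_real (lam n) * v2 n x
           - (of_real (k1 / rho1) * (v1xx n x + v3x n x + of_real l * v5x n x)
              + of_real (l * k3 / rho1) * (v5x n x - of_real l * v1 n x))))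
       (\<lambda>x. of_real (lam n ^ ell) * (\<i> * of_real (lam n) * v3 n x - v4 n x))
       (\<lambda>x. of_real (lam n ^ ell) * (\<i> * of_real (lam n) * v3x n x - v4x n x))
       (\<lambda>x. of_real (lam n ^ ell) * (\<i> * of_real (lam n) * v4 n x
           - (of_real (k2 / rho2) * v3xx n x
              - of_real (k1 / rho2) * (v1x n x + v3 n x + of_real l * v5 n x))))
       (\<lambda>x. of_real (lam n ^ ell) * (\<i> * of_real (lam n) * v5 n x - v6 n x))
       (\<lambda>x. of_real (lam n ^ ell) * (\<i> * of_real (lam n) * v5x n x - v6x n x))
       (\<lambda>x. of_real (lam n ^ ell) * (\<i> * of_real (lam n) * v6 n x
           - (of_real (k3 / rho1) * (v5xx n x - of_real l * v1x n x)
              - of_real (l * k1 / rho1) * (v1x n x + v3 n x + of_real l * v5 n x)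
              - of_real (a x / rho1) * v6 n x))))
       \<longlonglongrightarrow> 0"
  shows "\<forall>h h' :: real \<Rightarrow> real.
           (\<forall>x\<in>{0..L}. (h has_real_derivative h' x) (at x within {0..L}))
           \<and> continuous_on {0..L} h' \<and> h 0 = 0 \<and> h L = 0
         \<longrightarrow> (\<lambda>n. LINT x:{0..L}|lborel. h' x *
               (rho1 * (cmod (of_real (lam n) * v1 n x))\<^sup>2 + k1 * (cmod (v1x n x))\<^sup>2
              + rho2 * (cmod (of_real (lam n) * v3 n x))\<^sup>2 + k2 * (cmod (v3x n x))\<^sup>2
              + rho1 * (cmod (of_real (lam n) * v5 n x))\<^sup>2 + k3 * (cmod (v5x n x))\<^sup>2))
             \<longlonglongrightarrow> 0"
proof (intro allI impI)
  fix h h' :: "real \<Rightarrow> real"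
  assume HH: "(\<forall>x\<in>{0..L}. (h has_real_derivative h' x) (at x within {0..L}))
           \<and> continuous_on {0..L} h' \<and> h 0 = 0 \<and> h L = 0"
  have hd: "\<forall>x\<in>{0..L}. (h has_real_derivative h' x) (at x within {0..L})" using HH by blast
  have hc: "continuous_on {0..L} h'" using HH by blast
  have h0: "h 0 = 0" and hL: "h L = 0" using HH by auto
  have L0: "0 \<le> L" and Lp: "L > 0" using pos by auto
  have rnz: "rho1 \<noteq> 0" "rho2 \<noteq> 0" using pos by auto
  have wh: "is_wderiv L (\<lambda>x. complex_of_real (h x)) (\<lambda>x. complex_of_real (h' x))"
    by (rule wd_of_real[OF hd hc])
  have ch: "continuous_on {0..L} h"
  proof -
    have "continuous_on {0..L} (\<lambda>x. Re (complex_of_real (h x)))" by (intro continuous_intros wd_cont[OF wh])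
    then show ?thesis by simp
  qed
  note af = a_facts[OF beta a0 a_in a_out]
  define Ba where "Ba = a0 + \<bar>a 0\<bar> + \<bar>a beta\<bar> + \<bar>a L\<bar>"
  have ma: "set_borel_measurable lborel {0..L} (\<lambda>x. complex_of_real (a x))" by (rule sbm_of_real[OF af(1)])
  have Ba: "\<And>x. x \<in> {0..L} \<Longrightarrow> cmod (complex_of_real (a x)) \<le> Ba" using af(2) unfolding Ba_def by simp
  have mar: "set_borel_measurable lborel {0..L} (\<lambda>x. complex_of_real (a x / rho1))"
  proof -
    have "set_borel_measurable lborel {0..L} (\<lambda>x. complex_of_real (a x) * complex_of_real (1 / rho1))"
      by (rule sbm_mult[OF ma sbm_const]) simp
    then show ?thesis by (simp add: divide_inverse)
  qed
  have Bar: "cmod (complex_of_real (a x / rho1)) \<le> Ba / rho1" if x: "x \<in> {0..L}" for x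
  proof -
    have "\<bar>a x\<bar> \<le> Ba" using af(2)[OF x] unfolding Ba_def .
    then have "\<bar>a x\<bar> / rho1 \<le> Ba / rho1" using pos(1) by (simp add: divide_right_mono)
    then show ?thesis using pos(1) by (simp add: norm_divide)
  qed
  have dn: "H2H10 L (v1 n) (v1x n) (v1xx n) \<and> H10 L (v2 n) (v2x n)
                 \<and> H2H10 L (v3 n) (v3x n) (v3xx n) \<and> H10 L (v4 n) (v4x n)
                 \<and> H2H10 L (v5 n) (v5x n) (v5xx n) \<and> H10 L (v6 n) (v6x n)" for n
    using dom by blast
  have H1: "H10 L (v1 n) (v1x n)" and H2: "H10 L (v2 n) (v2x n)" and H3: "H10 L (v3 n) (v3x n)"
    and H4: "H10 L (v4 n) (v4x n)" and H5: "H10 L (v5 n) (v5x n)" and H6: "H10 L (v6 n) (v6x n)"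
    and W1x: "is_wderiv L (v1x n) (v1xx n)" and W3x: "is_wderiv L (v3x n) (v3xx n)"
    and W5x: "is_wderiv L (v5x n) (v5xx n)" for n
    using dn[of n] unfolding H2H10_def by blast+
  have W1: "is_wderiv L (v1 n) (v1x n)" and W2: "is_wderiv L (v2 n) (v2x n)" and W3: "is_wderiv L (v3 n) (v3x n)"
    and W4: "is_wderiv L (v4 n) (v4x n)" and W5: "is_wderiv L (v5 n) (v5x n)" and W6: "is_wderiv L (v6 n) (v6x n)" for n
    using H10_D(1)[OF H1] H10_D(1)[OF H2] H10_D(1)[OF H3] H10_D(1)[OF H4] H10_D(1)[OF H5] H10_D(1)[OF H6] by blast+
  have Lv: "L2 L (v1 n)" "L2 L (v1x n)" "L2 L (v1xx n)" "L2 L (v2 n)" "L2 L (v2x n)"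
    "L2 L (v3 n)" "L2 L (v3x n)" "L2 L (v3xx n)" "L2 L (v4 n)" "L2 L (v4x n)"
    "L2 L (v5 n)" "L2 L (v5x n)" "L2 L (v5xx n)" "L2 L (v6 n)" "L2 L (v6x n)" for n
    using wd_L2v[OF W1] wd_L2[OF W1] wd_L2[OF W1x] wd_L2v[OF W2] wd_L2[OF W2]
      wd_L2v[OF W3] wd_L2[OF W3] wd_L2[OF W3x] wd_L2v[OF W4] wd_L2[OF W4]
      wd_L2v[OF W5] wd_L2[OF W5] wd_L2[OF W5x] wd_L2v[OF W6] wd_L2[OF W6] by blast+
  have Lav6: "L2 L (\<lambda>x. complex_of_real (a x) * v6 n x)" for n by (rule L2_bdd[OF Lv(14) ma Ba])
  have Larv6: "L2 L (\<lambda>x. complex_of_real (a x / rho1) * v6 n x)" for n by (rule L2_bdd[OF Lv(14) mar Bar])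
  define g1 where "g1 n x = \<i> * of_real (lam n) * v1 n x - v2 n x" for n x
  define g1x where "g1x n x = \<i> * of_real (lam n) * v1x n x - v2x n x" for n x
  define g2 where "g2 n x = \<i> * of_real (lam n) * v2 n x
           - (of_real (k1 / rho1) * (v1xx n x + v3x n x + of_real l * v5x n x)
              + of_real (l * k3 / rho1) * (v5x n x - of_real l * v1 n x))" for n x
  define g3 where "g3 n x = \<i> * of_real (lam n) * v3 n x - v4 n x" for n x
  define g3x where "g3x n x = \<i> * of_real (lam n) * v3x n x - v4x n x" for n x
  define g4 where "g4 n x = \<i> * of_real (lam n) * v4 n x
           - (of_real (k2 / rho2) * v3xx n x
              - of_real (k1 / rho2) * (v1x n x + v3 n x + of_real l * v5 n x))" for n x
  define g5 where "g5 n x = \<i> * of_real (lam n) * v5 n x - v6 n x" for n x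
  define g5x where "g5x n x = \<i> * of_real (lam n) * v5x n x - v6x n x" for n x
  define g6 where "g6 n x = \<i> * of_real (lam n) * v6 n x
           - (of_real (k3 / rho1) * (v5xx n x - of_real l * v1x n x)
              - of_real (l * k1 / rho1) * (v1x n x + v3 n x + of_real l * v5 n x)
              - of_real (a x / rho1) * v6 n x)" for n x
  have Lg: "L2 L (g1 n)" "L2 L (g1x n)" "L2 L (g2 n)" "L2 L (g3 n)" "L2 L (g3x n)" "L2 L (g4 n)"
     "L2 L (g5 n)" "L2 L (g5x n)" "L2 L (g6 n)" for n
    unfolding g1_def g1x_def g2_def g3_def g3x_def g4_def g5_def g5x_def g6_def
    by (intro L2_diff L2_add L2_cmult Lv Larv6)+
  have Hg1: "H10 L (g1 n) (g1x n)" and Hg3: "H10 L (g3 n) (g3x n)" and Hg5: "H10 L (g5 n) (g5x n)" for n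
  proof -
    show "H10 L (g1 n) (g1x n)"
      unfolding H10_def g1_def g1x_def
      using wd_diff[OF wd_cmult[OF W1] W2] H10_D(2,3)[OF H1] H10_D(2,3)[OF H2] by simp
    show "H10 L (g3 n) (g3x n)"
      unfolding H10_def g3_def g3x_def
      using wd_diff[OF wd_cmult[OF W3] W4] H10_D(2,3)[OF H3] H10_D(2,3)[OF H4] by simp
    show "H10 L (g5 n) (g5x n)"
      unfolding H10_def g5_def g5x_def
      using wd_diff[OF wd_cmult[OF W5] W6] H10_D(2,3)[OF H5] H10_D(2,3)[OF H6] by simp
  qed
  define EG where "EG n = k1 * nsq L (\<lambda>x. g1x n x + g3 n x + of_real l * g5 n x) + rho1 * nsq L (g2 n)
     + k2 * nsq L (g3x n) + rho2 * nsq L (g4 n) + k3 * nsq L (\<lambda>x. g5x n x - of_real l * g1 n x)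
     + rho1 * nsq L (g6 n)" for n
  have EG0: "0 \<le> EG n" for n unfolding EG_def using pos by (simp add: nsq_nonneg)
  have FG: "Hnorm rho1 rho2 k1 k2 k3 l L
       (\<lambda>x. of_real (lam n ^ ell) * (\<i> * of_real (lam n) * v1 n x - v2 n x))
       (\<lambda>x. of_real (lam n ^ ell) * (\<i> * of_real (lam n) * v1x n x - v2x n x))
       (\<lambda>x. of_real (lam n ^ ell) * (\<i> * of_real (lam n) * v2 n x
           - (of_real (k1 / rho1) * (v1xx n x + v3x n x + of_real l * v5x n x)
              + of_real (l * k3 / rho1) * (v5x n x - of_real l * v1 n x))))
       (\<lambda>x. of_real (lam n ^ ell) * (\<i> * of_real (lam n) * v3 n x - v4 n x))
       (\<lambda>x. of_real (lam n ^ ell) * (\<i> * of_real (lam n) * v3x n x - v4x n x))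
       (\<lambda>x. of_real (lam n ^ ell) * (\<i> * of_real (lam n) * v4 n x
           - (of_real (k2 / rho2) * v3xx n x
              - of_real (k1 / rho2) * (v1x n x + v3 n x + of_real l * v5 n x))))
       (\<lambda>x. of_real (lam n ^ ell) * (\<i> * of_real (lam n) * v5 n x - v6 n x))
       (\<lambda>x. of_real (lam n ^ ell) * (\<i> * of_real (lam n) * v5x n x - v6x n x))
       (\<lambda>x. of_real (lam n ^ ell) * (\<i> * of_real (lam n) * v6 n x
           - (of_real (k3 / rho1) * (v5xx n x - of_real l * v1x n x)
              - of_real (l * k1 / rho1) * (v1x n x + v3 n x + of_real l * v5 n x)
              - of_real (a x / rho1) * v6 n x)))
     = \<bar>lam n ^ ell\<bar> * sqrt (EG n)" for n
  proof -
    have "Hnorm rho1 rho2 k1 k2 k3 l L (g1 n) (g1x n) (g2 n) (g3 n) (g3x n) (g4 n) (g5 n) (g5x n) (g6 n) = sqrt (EG n)"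
      unfolding EG_def by (rule Hnorm_eq[OF Lg])
    moreover have "Hnorm rho1 rho2 k1 k2 k3 l L
       (\<lambda>x. of_real (lam n ^ ell) * g1 n x) (\<lambda>x. of_real (lam n ^ ell) * g1x n x) (\<lambda>x. of_real (lam n ^ ell) * g2 n x)
       (\<lambda>x. of_real (lam n ^ ell) * g3 n x) (\<lambda>x. of_real (lam n ^ ell) * g3x n x) (\<lambda>x. of_real (lam n ^ ell) * g4 n x)
       (\<lambda>x. of_real (lam n ^ ell) * g5 n x) (\<lambda>x. of_real (lam n ^ ell) * g5x n x) (\<lambda>x. of_real (lam n ^ ell) * g6 n x)
       = \<bar>lam n ^ ell\<bar> * Hnorm rho1 rho2 k1 k2 k3 l L (g1 n) (g1x n) (g2 n) (g3 n) (g3x n) (g4 n) (g5 n) (g5x n) (g6 n)"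
      by (rule Hnorm_scale)
    ultimately show ?thesis
      unfolding g1_def g1x_def g2_def g3_def g3x_def g4_def g5_def g5x_def g6_def by simp
  qed
  have EG_lim: "EG \<longlonglongrightarrow> 0"
  proof -
    have ev: "eventually (\<lambda>n. 1 \<le> \<bar>lam n\<bar>) sequentially"
      using lam_inf unfolding filterlim_at_top by blast
    have sq: "(\<lambda>n. sqrt (EG n)) \<longlonglongrightarrow> 0"
    proof (rule tendsto_sandwich[OF _ _ tendsto_const F_lim])
      show "\<forall>\<^sub>F n in sequentially. 0 \<le> sqrt (EG n)" using EG0 by simp
      show "\<forall>\<^sub>F n in sequentially. sqrt (EG n) \<le> Hnorm rho1 rho2 k1 k2 k3 l L
       (\<lambda>x. of_real (lam n ^ ell) * (\<i> * of_real (lam n) * v1 n x - v2 n x))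
       (\<lambda>x. of_real (lam n ^ ell) * (\<i> * of_real (lam n) * v1x n x - v2x n x))
       (\<lambda>x. of_real (lam n ^ ell) * (\<i> * of_real (lam n) * v2 n x
           - (of_real (k1 / rho1) * (v1xx n x + v3x n x + of_real l * v5x n x)
              + of_real (l * k3 / rho1) * (v5x n x - of_real l * v1 n x))))
       (\<lambda>x. of_real (lam n ^ ell) * (\<i> * of_real (lam n) * v3 n x - v4 n x))
       (\<lambda>x. of_real (lam n ^ ell) * (\<i> * of_real (lam n) * v3x n x - v4x n x))
       (\<lambda>x. of_real (lam n ^ ell) * (\<i> * of_real (lam n) * v4 n x
           - (of_real (k2 / rho2) * v3xx n x
              - of_real (k1 / rho2) * (v1x n x + v3 n x + of_real l * v5 n x))))
       (\<lambda>x. of_real (lam n ^ ell) * (\<i> * of_real (lam n) * v5 n x - v6 n x))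
       (\<lambda>x. of_real (lam n ^ ell) * (\<i> * of_real (lam n) * v5x n x - v6x n x))
       (\<lambda>x. of_real (lam n ^ ell) * (\<i> * of_real (lam n) * v6 n x
           - (of_real (k3 / rho1) * (v5xx n x - of_real l * v1x n x)
              - of_real (l * k1 / rho1) * (v1x n x + v3 n x + of_real l * v5 n x)
              - of_real (a x / rho1) * v6 n x)))"
        using ev
      proof eventually_elim
        case (elim n)
        have "1 \<le> \<bar>lam n\<bar> ^ ell" using elim by (rule one_le_power)
        then have "1 * sqrt (EG n) \<le> \<bar>lam n ^ ell\<bar> * sqrt (EG n)"
          using EG0[of n] by (intro mult_right_mono) (auto simp: power_abs)
        then show ?case unfolding FG by simp
      qed
    qed
    have "(\<lambda>n. (sqrt (EG n))\<^sup>2) \<longlonglongrightarrow> 0" using tendsto_power[OF sq, of 2] by simp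
    moreover have "(\<lambda>n. (sqrt (EG n))\<^sup>2) = EG" by (rule ext) (simp add: EG0)
    ultimately show ?thesis by simp
  qed
  define w1 where "w1 n x = v1x n x + v3 n x + of_real l * v5 n x" for n x
  define w5 where "w5 n x = v5x n x - of_real l * v1 n x" for n x
  have HU: "k1 * nsq L (w1 n) + rho1 * nsq L (v2 n) + k2 * nsq L (v3x n) + rho2 * nsq L (v4 n)
      + k3 * nsq L (w5 n) + rho1 * nsq L (v6 n) = 1" for n
  proof -
    have "Hnorm rho1 rho2 k1 k2 k3 l L (v1 n) (v1x n) (v2 n) (v3 n) (v3x n) (v4 n) (v5 n) (v5x n) (v6 n)
      = sqrt (k1 * nsq L (w1 n) + rho1 * nsq L (v2 n) + k2 * nsq L (v3x n) + rho2 * nsq L (v4 n)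
      + k3 * nsq L (w5 n) + rho1 * nsq L (v6 n))"
      unfolding w1_def w5_def by (rule Hnorm_eq[OF Lv(1) Lv(2) Lv(4) Lv(6) Lv(7) Lv(9) Lv(11) Lv(12) Lv(14)])
    then show ?thesis using unit by simp
  qed
  have nn: "0 \<le> k1 * nsq L (w1 n)" "0 \<le> rho1 * nsq L (v2 n)" "0 \<le> k2 * nsq L (v3x n)"
    "0 \<le> rho2 * nsq L (v4 n)" "0 \<le> k3 * nsq L (w5 n)" "0 \<le> rho1 * nsq L (v6 n)" for n
    using pos by (simp_all add: nsq_nonneg)
  have bU: "nsq L (w1 n) \<le> 1 / k1" "nsq L (v2 n) \<le> 1 / rho1" "nsq L (v3x n) \<le> 1 / k2"
    "nsq L (v4 n) \<le> 1 / rho2" "nsq L (w5 n) \<le> 1 / k3" "nsq L (v6 n) \<le> 1 / rho1" for n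
  proof -
    have "k1 * nsq L (w1 n) \<le> 1" "rho1 * nsq L (v2 n) \<le> 1" "k2 * nsq L (v3x n) \<le> 1"
      "rho2 * nsq L (v4 n) \<le> 1" "k3 * nsq L (w5 n) \<le> 1" "rho1 * nsq L (v6 n) \<le> 1"
      using HU[of n] nn[of n] by linarith+
    then show "nsq L (w1 n) \<le> 1 / k1" "nsq L (v2 n) \<le> 1 / rho1" "nsq L (v3x n) \<le> 1 / k2"
      "nsq L (v4 n) \<le> 1 / rho2" "nsq L (w5 n) \<le> 1 / k3" "nsq L (v6 n) \<le> 1 / rho1"
      using pos by (simp_all add: pos_le_divide_eq mult.commute)
  qed
  define K0 where "K0 = 1 / k1 + 1 / k2 + 1 / k3"
  have K0: "K0 \<ge> 0" unfolding K0_def using pos by simp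
  define c2 where "c2 = 4 * L\<^sup>2 * (3 + 8 * L\<^sup>2)"
  define c4 where "c4 = 2 * (2 + 8 * L\<^sup>2) + 2 * l\<^sup>2 * (4 * L\<^sup>2 * (3 + 8 * L\<^sup>2))"
  define c5 where "c5 = 2 + 2 * l\<^sup>2 * (4 * L\<^sup>2 * (3 + 8 * L\<^sup>2))"
  have cpos: "0 \<le> c2" "0 \<le> c4" "0 \<le> c5" "0 \<le> 4 * L\<^sup>2" unfolding c2_def c4_def c5_def by simp_all
  have PU: "nsq L (\<lambda>x. v1x n x + v3 n x + of_real l * v5 n x) + nsq L (v3x n) + nsq L (\<lambda>x. v5x n x - of_real l * v1 n x) \<le> K0" for n
    using bU[of n] unfolding K0_def w1_def w5_def by (simp add: add_mono)
  have cU: "nsq L (v1x n) \<le> c4 * (nsq L (\<lambda>x. v1x n x + v3 n x + of_real l * v5 n x) + nsq L (v3x n) + nsq L (\<lambda>x. v5x n x - of_real l * v1 n x))"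
    "nsq L (v5x n) \<le> c5 * (nsq L (\<lambda>x. v1x n x + v3 n x + of_real l * v5 n x) + nsq L (v3x n) + nsq L (\<lambda>x. v5x n x - of_real l * v1 n x))" for n
    using coerc(4,5)[OF H1[of n] H3[of n] H5[of n] Lp, where l=l] unfolding c4_def c5_def by auto
  have bU2: "nsq L (v1x n) \<le> c4 * K0" "nsq L (v5x n) \<le> c5 * K0" for n
    using order_trans[OF cU(1) mult_left_mono[OF PU cpos(2)]] order_trans[OF cU(2) mult_left_mono[OF PU cpos(3)]]
    by blast+
  have Bs: "Bseq (\<lambda>n. nsq L (v1x n))" "Bseq (\<lambda>n. nsq L (v3x n))" "Bseq (\<lambda>n. nsq L (v5x n))" "Bseq (\<lambda>n. nsq L (v2 n))" "Bseq (\<lambda>n. nsq L (v4 n))" "Bseq (\<lambda>n. nsq L (v6 n))" "Bseq (\<lambda>n. nsq L (w1 n))" "Bseq (\<lambda>n. nsq L (w5 n))"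
  proof -
    show "Bseq (\<lambda>n. nsq L (v1x n))" by (rule Bseq_constI, rule nsq_nonneg, rule bU2(1))
    show "Bseq (\<lambda>n. nsq L (v3x n))" by (rule Bseq_constI, rule nsq_nonneg, rule bU(3))
    show "Bseq (\<lambda>n. nsq L (v5x n))" by (rule Bseq_constI, rule nsq_nonneg, rule bU2(2))
    show "Bseq (\<lambda>n. nsq L (v2 n))" by (rule Bseq_constI, rule nsq_nonneg, rule bU(2))
    show "Bseq (\<lambda>n. nsq L (v4 n))" by (rule Bseq_constI, rule nsq_nonneg, rule bU(4))
    show "Bseq (\<lambda>n. nsq L (v6 n))" by (rule Bseq_constI, rule nsq_nonneg, rule bU(6))
    show "Bseq (\<lambda>n. nsq L (w1 n))" by (rule Bseq_constI, rule nsq_nonneg, rule bU(1))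
    show "Bseq (\<lambda>n. nsq L (w5 n))" by (rule Bseq_constI, rule nsq_nonneg, rule bU(5))
  qed
  have EGp: "k1 * nsq L (\<lambda>x. g1x n x + g3 n x + of_real l * g5 n x) \<le> EG n"
    "rho1 * nsq L (g2 n) \<le> EG n" "k2 * nsq L (g3x n) \<le> EG n" "rho2 * nsq L (g4 n) \<le> EG n"
    "k3 * nsq L (\<lambda>x. g5x n x - of_real l * g1 n x) \<le> EG n" "rho1 * nsq L (g6 n) \<le> EG n" for n
  proof -
    have "0 \<le> k1 * nsq L (\<lambda>x. g1x n x + g3 n x + of_real l * g5 n x)" "0 \<le> rho1 * nsq L (g2 n)"
      "0 \<le> k2 * nsq L (g3x n)" "0 \<le> rho2 * nsq L (g4 n)"
      "0 \<le> k3 * nsq L (\<lambda>x. g5x n x - of_real l * g1 n x)" "0 \<le> rho1 * nsq L (g6 n)"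
      using pos by (simp_all add: nsq_nonneg)
    then show "k1 * nsq L (\<lambda>x. g1x n x + g3 n x + of_real l * g5 n x) \<le> EG n"
      "rho1 * nsq L (g2 n) \<le> EG n" "k2 * nsq L (g3x n) \<le> EG n" "rho2 * nsq L (g4 n) \<le> EG n"
      "k3 * nsq L (\<lambda>x. g5x n x - of_real l * g1 n x) \<le> EG n" "rho1 * nsq L (g6 n) \<le> EG n"
      unfolding EG_def by linarith+
  qed
  have EGq: "nsq L (\<lambda>x. g1x n x + g3 n x + of_real l * g5 n x) \<le> (1 / k1) * EG n"
    "nsq L (g2 n) \<le> (1 / rho1) * EG n" "nsq L (g3x n) \<le> (1 / k2) * EG n" "nsq L (g4 n) \<le> (1 / rho2) * EG n"
    "nsq L (\<lambda>x. g5x n x - of_real l * g1 n x) \<le> (1 / k3) * EG n" "nsq L (g6 n) \<le> (1 / rho1) * EG n" for n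
    using EGp[of n] pos by (simp_all add: pos_le_divide_eq mult.commute)
  have cG: "nsq L (g3 n) \<le> 4 * L\<^sup>2 * (nsq L (\<lambda>x. g1x n x + g3 n x + of_real l * g5 n x) + nsq L (g3x n) + nsq L (\<lambda>x. g5x n x - of_real l * g1 n x))"
    "nsq L (g1 n) + nsq L (g5 n) \<le> c2 * (nsq L (\<lambda>x. g1x n x + g3 n x + of_real l * g5 n x) + nsq L (g3x n) + nsq L (\<lambda>x. g5x n x - of_real l * g1 n x))"
    "nsq L (g3x n) \<le> (nsq L (\<lambda>x. g1x n x + g3 n x + of_real l * g5 n x) + nsq L (g3x n) + nsq L (\<lambda>x. g5x n x - of_real l * g1 n x))"
    "nsq L (g1x n) \<le> c4 * (nsq L (\<lambda>x. g1x n x + g3 n x + of_real l * g5 n x) + nsq L (g3x n) + nsq L (\<lambda>x. g5x n x - of_real l * g1 n x))"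
    "nsq L (g5x n) \<le> c5 * (nsq L (\<lambda>x. g1x n x + g3 n x + of_real l * g5 n x) + nsq L (g3x n) + nsq L (\<lambda>x. g5x n x - of_real l * g1 n x))" for n
    using coerc[OF Hg1[of n] Hg3[of n] Hg5[of n] Lp, where l=l] unfolding c2_def c4_def c5_def by (auto simp: mult.assoc)
  have PG: "nsq L (\<lambda>x. g1x n x + g3 n x + of_real l * g5 n x) + nsq L (g3x n) + nsq L (\<lambda>x. g5x n x - of_real l * g1 n x) \<le> K0 * EG n" for n
    using EGq[of n] unfolding K0_def by (simp add: algebra_simps)
  have lim_g: "(\<lambda>n. nsq L (g1 n)) \<longlonglongrightarrow> 0" "(\<lambda>n. nsq L (g3 n)) \<longlonglongrightarrow> 0" "(\<lambda>n. nsq L (g5 n)) \<longlonglongrightarrow> 0"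
    "(\<lambda>n. nsq L (g1x n)) \<longlonglongrightarrow> 0" "(\<lambda>n. nsq L (g3x n)) \<longlonglongrightarrow> 0" "(\<lambda>n. nsq L (g5x n)) \<longlonglongrightarrow> 0"
    "(\<lambda>n. nsq L (\<lambda>x. g1x n x + g3 n x + of_real l * g5 n x)) \<longlonglongrightarrow> 0"
    "(\<lambda>n. nsq L (\<lambda>x. g5x n x - of_real l * g1 n x)) \<longlonglongrightarrow> 0"
    "(\<lambda>n. nsq L (g2 n)) \<longlonglongrightarrow> 0" "(\<lambda>n. nsq L (g4 n)) \<longlonglongrightarrow> 0" "(\<lambda>n. nsq L (g6 n)) \<longlonglongrightarrow> 0"
  proof -
    have a1: "nsq L (g1 n) \<le> (c2 * K0) * EG n" for n
    proof -
      have "nsq L (g1 n) \<le> c2 * (nsq L (\<lambda>x. g1x n x + g3 n x + of_real l * g5 n x) + nsq L (g3x n) + nsq L (\<lambda>x. g5x n x - of_real l * g1 n x))"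
        using cG(2)[of n] nsq_nonneg[of L "g5 n"] by linarith
      also have "\<dots> \<le> c2 * (K0 * EG n)" by (rule mult_left_mono[OF PG cpos(1)])
      finally show ?thesis by (simp add: mult.assoc)
    qed
    have a5: "nsq L (g5 n) \<le> (c2 * K0) * EG n" for n
    proof -
      have "nsq L (g5 n) \<le> c2 * (nsq L (\<lambda>x. g1x n x + g3 n x + of_real l * g5 n x) + nsq L (g3x n) + nsq L (\<lambda>x. g5x n x - of_real l * g1 n x))"
        using cG(2)[of n] nsq_nonneg[of L "g1 n"] by linarith
      also have "\<dots> \<le> c2 * (K0 * EG n)" by (rule mult_left_mono[OF PG cpos(1)])
      finally show ?thesis by (simp add: mult.assoc)
    qed
    have a3: "nsq L (g3 n) \<le> (4 * L\<^sup>2 * K0) * EG n" for n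
      using order_trans[OF cG(1) mult_left_mono[OF PG cpos(4)]] by (simp add: mult.assoc)
    have a1x: "nsq L (g1x n) \<le> (c4 * K0) * EG n" for n
      using order_trans[OF cG(4) mult_left_mono[OF PG cpos(2)]] by (simp add: mult.assoc)
    have a3x: "nsq L (g3x n) \<le> K0 * EG n" for n
      using order_trans[OF cG(3) PG] .
    have a5x: "nsq L (g5x n) \<le> (c5 * K0) * EG n" for n
      using order_trans[OF cG(5) mult_left_mono[OF PG cpos(3)]] by (simp add: mult.assoc)
    show "(\<lambda>n. nsq L (g1 n)) \<longlonglongrightarrow> 0" by (rule lim0_bound[OF nsq_nonneg a1 EG_lim])
    show "(\<lambda>n. nsq L (g3 n)) \<longlonglongrightarrow> 0" by (rule lim0_bound[OF nsq_nonneg a3 EG_lim])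
    show "(\<lambda>n. nsq L (g5 n)) \<longlonglongrightarrow> 0" by (rule lim0_bound[OF nsq_nonneg a5 EG_lim])
    show "(\<lambda>n. nsq L (g1x n)) \<longlonglongrightarrow> 0" by (rule lim0_bound[OF nsq_nonneg a1x EG_lim])
    show "(\<lambda>n. nsq L (g3x n)) \<longlonglongrightarrow> 0" by (rule lim0_bound[OF nsq_nonneg a3x EG_lim])
    show "(\<lambda>n. nsq L (g5x n)) \<longlonglongrightarrow> 0" by (rule lim0_bound[OF nsq_nonneg a5x EG_lim])
    show "(\<lambda>n. nsq L (\<lambda>x. g1x n x + g3 n x + of_real l * g5 n x)) \<longlonglongrightarrow> 0"
      by (rule lim0_bound[OF nsq_nonneg EGq(1) EG_lim])
    show "(\<lambda>n. nsq L (\<lambda>x. g5x n x - of_real l * g1 n x)) \<longlonglongrightarrow> 0"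
      by (rule lim0_bound[OF nsq_nonneg EGq(5) EG_lim])
    show "(\<lambda>n. nsq L (g2 n)) \<longlonglongrightarrow> 0" by (rule lim0_bound[OF nsq_nonneg EGq(2) EG_lim])
    show "(\<lambda>n. nsq L (g4 n)) \<longlonglongrightarrow> 0" by (rule lim0_bound[OF nsq_nonneg EGq(4) EG_lim])
    show "(\<lambda>n. nsq L (g6 n)) \<longlonglongrightarrow> 0" by (rule lim0_bound[OF nsq_nonneg EGq(6) EG_lim])
  qed
  define G2 where "G2 n x = of_real rho1 * g2 n x" for n x
  define G4 where "G4 n x = of_real rho2 * g4 n x" for n x
  define G6 where "G6 n x = of_real rho1 * g6 n x" for n x
  have LG: "L2 L (G2 n)" "L2 L (G4 n)" "L2 L (G6 n)" for n
    unfolding G2_def G4_def G6_def by (intro L2_cmult Lg)+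
  have lim_G: "(\<lambda>n. nsq L (G2 n)) \<longlonglongrightarrow> 0" "(\<lambda>n. nsq L (G4 n)) \<longlonglongrightarrow> 0" "(\<lambda>n. nsq L (G6 n)) \<longlonglongrightarrow> 0"
  proof -
    have e: "nsq L (G2 n) = rho1\<^sup>2 * nsq L (g2 n)" "nsq L (G4 n) = rho2\<^sup>2 * nsq L (g4 n)"
      "nsq L (G6 n) = rho1\<^sup>2 * nsq L (g6 n)" for n
      unfolding G2_def G4_def G6_def nsq_cmult by simp_all
    show "(\<lambda>n. nsq L (G2 n)) \<longlonglongrightarrow> 0" unfolding e using tendsto_mult_right_zero[OF lim_g(9)] by simp
    show "(\<lambda>n. nsq L (G4 n)) \<longlonglongrightarrow> 0" unfolding e using tendsto_mult_right_zero[OF lim_g(10)] by simp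
    show "(\<lambda>n. nsq L (G6 n)) \<longlonglongrightarrow> 0" unfolding e using tendsto_mult_right_zero[OF lim_g(11)] by simp
  qed
  have nz: "lam n \<noteq> 0" for n using lam_nz by blast
  have lim_v: "(\<lambda>n. nsq L (v1 n)) \<longlonglongrightarrow> 0" "(\<lambda>n. nsq L (v3 n)) \<longlonglongrightarrow> 0" "(\<lambda>n. nsq L (v5 n)) \<longlonglongrightarrow> 0"
  proof -
    show "(\<lambda>n. nsq L (v1 n)) \<longlonglongrightarrow> 0"
      by (rule small_v[OF nz lam_inf Lv(4) Lg(1) _ bU(2) lim_g(1)]) (simp add: g1_def)
    show "(\<lambda>n. nsq L (v3 n)) \<longlonglongrightarrow> 0"
      by (rule small_v[OF nz lam_inf Lv(9) Lg(4) _ bU(4) lim_g(2)]) (simp add: g3_def)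
    show "(\<lambda>n. nsq L (v5 n)) \<longlonglongrightarrow> 0"
      by (rule small_v[OF nz lam_inf Lv(14) Lg(7) _ bU(6) lim_g(3)]) (simp add: g5_def)
  qed
  define q1 where "q1 n x = \<i> * of_real (lam n) * v1 n x + v2 n x" for n x
  define q3 where "q3 n x = \<i> * of_real (lam n) * v3 n x + v4 n x" for n x
  define q5 where "q5 n x = \<i> * of_real (lam n) * v5 n x + v6 n x" for n x
  have Lq: "L2 L (q1 n)" "L2 L (q3 n)" "L2 L (q5 n)" for n
    unfolding q1_def q3_def q5_def by (intro L2_add L2_cmult Lv)+
  have Bq: "Bseq (\<lambda>n. nsq L (q1 n))" "Bseq (\<lambda>n. nsq L (q3 n))" "Bseq (\<lambda>n. nsq L (q5 n))"
  proof -
    show "Bseq (\<lambda>n. nsq L (q1 n))" unfolding q1_def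
      by (rule q_bseq[OF Lv(4) Lg(1) _ bU(2) lim_g(1)]) (simp add: g1_def)
    show "Bseq (\<lambda>n. nsq L (q3 n))" unfolding q3_def
      by (rule q_bseq[OF Lv(9) Lg(4) _ bU(4) lim_g(2)]) (simp add: g3_def)
    show "Bseq (\<lambda>n. nsq L (q5 n))" unfolding q5_def
      by (rule q_bseq[OF Lv(14) Lg(7) _ bU(6) lim_g(3)]) (simp add: g5_def)
  qed
  have Ww1: "is_wderiv L (w1 n) (\<lambda>x. v1xx n x + v3x n x + of_real l * v5x n x)" for n
    unfolding w1_def by (intro wd_add wd_cmult W1x W3 W5)
  have Ww5: "is_wderiv L (w5 n) (\<lambda>x. v5xx n x - of_real l * v1x n x)" for n
    unfolding w5_def by (intro wd_diff wd_cmult W5x W1)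
  have Lw: "L2 L (w1 n)" "L2 L (w5 n)" for n using wd_L2v[OF Ww1] wd_L2v[OF Ww5] by blast+
  define PG1 where "PG1 n x = g1x n x + g3 n x + of_real l * g5 n x" for n x
  define PG5 where "PG5 n x = g5x n x - of_real l * g1 n x" for n x
  have LPG: "L2 L (PG1 n)" "L2 L (PG5 n)" for n unfolding PG1_def PG5_def by (intro L2_add L2_diff L2_cmult Lg)+
  have lim_PG: "(\<lambda>n. nsq L (PG1 n)) \<longlonglongrightarrow> 0" "(\<lambda>n. nsq L (PG5 n)) \<longlonglongrightarrow> 0"
    unfolding PG1_def PG5_def using lim_g(7,8) by simp_all
  define Wd where "Wd n x = complex_of_real k1 * PG1 n x * cnj (w1 n x) + complex_of_real 1 * G2 n x * cnj (v2 n x)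
      + complex_of_real k2 * g3x n x * cnj (v3x n x) + complex_of_real 1 * G4 n x * cnj (v4 n x)
      + complex_of_real k3 * PG5 n x * cnj (w5 n x) + complex_of_real 1 * G6 n x * cnj (v6 n x)" for n x
  define Ga where "Ga n x = k1 * (Re ((v1xx n x + v3x n x + of_real l * v5x n x) * cnj (v2 n x)) + Re (w1 n x * cnj (v2x n x)))
      + k2 * (Re (v3xx n x * cnj (v4 n x)) + Re (v3x n x * cnj (v4x n x)))
      + k3 * (Re ((v5xx n x - of_real l * v1x n x) * cnj (v6 n x)) + Re (w5 n x * cnj (v6x n x)))" for n x
  have dptw: "a x * (cmod (v6 n x))\<^sup>2 = Ga n x + Re (Wd n x)" for n x
    unfolding Ga_def Wd_def PG1_def PG5_def G2_def G4_def G6_def g1_def g1x_def g2_def g3_def g3x_def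
      g4_def g5_def g5x_def g6_def w1_def w5_def
    by (rule diss_identity[OF Gform2[OF rnz(1)] Gform4[OF rnz(2)] Gform6[OF rnz(1)]])
  have Ga0: "set_integrable lborel {0..L} (Ga n) \<and> (LINT x:{0..L}|lborel. Ga n x) = 0" for n
    unfolding Ga_def
    by (intro sumZ scaleZ conjI gamma_int[OF W2 Ww1] gamma_int[OF W4 W3x] gamma_int[OF W6 Ww5]
        ibp_zero[OF H2 Ww1 L0] ibp_zero[OF H4 W3x L0] ibp_zero[OF H6 Ww5 L0])
  have mc: "set_borel_measurable lborel {0..L} (\<lambda>x. complex_of_real c)" for c by (rule sbm_const) simp
  define Jd where "Jd n = k1 * (LINT x:{0..L}|lborel. cmod (PG1 n x) * cmod (w1 n x))
     + 1 * (LINT x:{0..L}|lborel. cmod (G2 n x) * cmod (v2 n x))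
     + k2 * (LINT x:{0..L}|lborel. cmod (g3x n x) * cmod (v3x n x))
     + 1 * (LINT x:{0..L}|lborel. cmod (G4 n x) * cmod (v4 n x))
     + k3 * (LINT x:{0..L}|lborel. cmod (PG5 n x) * cmod (w5 n x))
     + 1 * (LINT x:{0..L}|lborel. cmod (G6 n x) * cmod (v6 n x))" for n
  have Wd_int: "set_integrable lborel {0..L} (Wd n) \<and> cmod (LINT x:{0..L}|lborel. Wd n x) \<le> Jd n" for n
    unfolding Wd_def Jd_def
    by (intro sumI tbc LPG Lw Lv LG Lg mc) (use pos in auto)
  have Jd_lim: "Jd \<longlonglongrightarrow> 0"
  proof -
    have "Jd \<longlonglongrightarrow> k1 * 0 + 1 * 0 + k2 * 0 + 1 * 0 + k3 * 0 + 1 * 0"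
      unfolding Jd_def
      by (intro tendsto_intros lim_pq[OF LPG(1) Lw(1) lim_PG(1) Bs(7)] lim_pq[OF LG(1) Lv(4) lim_G(1) Bs(4)]
         lim_pq[OF Lg(5) Lv(7) lim_g(5) Bs(2)] lim_pq[OF LG(2) Lv(9) lim_G(2) Bs(5)]
         lim_pq[OF LPG(2) Lw(2) lim_PG(2) Bs(8)] lim_pq[OF LG(3) Lv(14) lim_G(3) Bs(6)])
    then show ?thesis by simp
  qed
  have avi: "set_integrable lborel {0..L} (\<lambda>x. a x * (cmod (v6 n x))\<^sup>2)" for n
  proof -
    have "set_integrable lborel {0..L} (\<lambda>x. Re (complex_of_real (a x) * v6 n x * cnj (v6 n x)))"
      by (rule sint_Re(1)[OF L2_prod[OF Lav6 L2_cnj[OF Lv(14)]]])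
    moreover have "Re (complex_of_real (a x) * v6 n x * cnj (v6 n x)) = a x * (cmod (v6 n x))\<^sup>2" for x
      by (simp add: cmod_mult_self power2_eq_square algebra_simps)
    ultimately show ?thesis by simp
  qed
  define Dn where "Dn n = (LINT x:{0..L}|lborel. a x * (cmod (v6 n x))\<^sup>2)" for n
  have D_le: "Dn n \<le> Jd n" for n
  proof -
    have "Dn n = (LINT x:{0..L}|lborel. Ga n x + Re (Wd n x))" unfolding Dn_def dptw ..
    also have "\<dots> = (LINT x:{0..L}|lborel. Ga n x) + (LINT x:{0..L}|lborel. Re (Wd n x))"
      using Ga0[of n] sint_Re(1)[OF conjunct1[OF Wd_int[of n]]] by (simp add: set_integral_add(2))
    also have "\<dots> = Re (LINT x:{0..L}|lborel. Wd n x)" using Ga0[of n] sint_Re(2)[OF conjunct1[OF Wd_int[of n]]] by simp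
    also have "\<dots> \<le> cmod (LINT x:{0..L}|lborel. Wd n x)" by (rule complex_Re_le_cmod)
    also have "\<dots> \<le> Jd n" using Wd_int[of n] by blast
    finally show ?thesis .
  qed
  have D0: "0 \<le> Dn n" for n
    unfolding Dn_def set_lebesgue_integral_def
    by (rule integral_nonneg_AE) (use af(3) in \<open>auto simp: indicator_def elim!: eventually_mono\<close>)
  have D_lim: "Dn \<longlonglongrightarrow> 0"
    by (rule tendsto_sandwich[OF _ _ tendsto_const Jd_lim]) (auto simp: D0 D_le)
  have av6_lim: "(\<lambda>n. nsq L (\<lambda>x. complex_of_real (a x) * v6 n x)) \<longlonglongrightarrow> 0"
  proof (rule lim0_bound[OF nsq_nonneg _ D_lim])
    fix n
    show "nsq L (\<lambda>x. complex_of_real (a x) * v6 n x) \<le> a0 * Dn n"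
    proof -
      have "nsq L (\<lambda>x. complex_of_real (a x) * v6 n x) \<le> (LINT x:{0..L}|lborel. a0 * (a x * (cmod (v6 n x))\<^sup>2))"
        unfolding nsq_def
      proof (rule set_integral_mono_AE)
        show "set_integrable lborel {0..L} (\<lambda>x. (cmod (complex_of_real (a x) * v6 n x))\<^sup>2)" by (rule L2_sq[OF Lav6])
        show "set_integrable lborel {0..L} (\<lambda>x. a0 * (a x * (cmod (v6 n x))\<^sup>2))" using avi[of n] by simp
        show "AE x\<in>{0..L} in lborel. (cmod (complex_of_real (a x) * v6 n x))\<^sup>2 \<le> a0 * (a x * (cmod (v6 n x))\<^sup>2)"
          using af(3)
        proof eventually_elim
          case (elim x)
          show ?case
          proof
            assume "x \<in> {0..L}"
            then have ax: "0 \<le> a x" "a x \<le> a0" using elim by auto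
            have "(cmod (complex_of_real (a x) * v6 n x))\<^sup>2 = a x * (a x * (cmod (v6 n x))\<^sup>2)"
              by (simp add: norm_mult power_mult_distrib power2_eq_square)
            also have "\<dots> \<le> a0 * (a x * (cmod (v6 n x))\<^sup>2)"
              using ax by (intro mult_right_mono) auto
            finally show "(cmod (complex_of_real (a x) * v6 n x))\<^sup>2 \<le> a0 * (a x * (cmod (v6 n x))\<^sup>2)" .
          qed
        qed
      qed
      also have "\<dots> = a0 * Dn n" unfolding Dn_def by simp
      finally show ?thesis .
    qed
  qed
  have c_ba: "continuous_on {0..L} (\<lambda>x. complex_of_real (2 * h x))" by (intro continuous_intros ch hc)
  have m_ba: "set_borel_measurable lborel {0..L} (\<lambda>x. complex_of_real (2 * h x))" by (rule cont_b(1)[OF c_ba])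
  obtain B_ba where B_ba: "\<And>x. x \<in> {0..L} \<Longrightarrow> cmod (complex_of_real (2 * h x)) \<le> B_ba"
    using cont_b(2)[OF c_ba] by blast
  have c_bb: "continuous_on {0..L} (\<lambda>x. complex_of_real (2 * h x * rho1))" by (intro continuous_intros ch hc)
  have m_bb: "set_borel_measurable lborel {0..L} (\<lambda>x. complex_of_real (2 * h x * rho1))" by (rule cont_b(1)[OF c_bb])
  obtain B_bb where B_bb: "\<And>x. x \<in> {0..L} \<Longrightarrow> cmod (complex_of_real (2 * h x * rho1)) \<le> B_bb"
    using cont_b(2)[OF c_bb] by blast
  have c_bc: "continuous_on {0..L} (\<lambda>x. complex_of_real (2 * h x * rho2))" by (intro continuous_intros ch hc)
  have m_bc: "set_borel_measurable lborel {0..L} (\<lambda>x. complex_of_real (2 * h x * rho2))" by (rule cont_b(1)[OF c_bc])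
  obtain B_bc where B_bc: "\<And>x. x \<in> {0..L} \<Longrightarrow> cmod (complex_of_real (2 * h x * rho2)) \<le> B_bc"
    using cont_b(2)[OF c_bc] by blast
  have c_b7: "continuous_on {0..L} (\<lambda>x. complex_of_real (- 2 * h x * l\<^sup>2 * k3))" by (intro continuous_intros ch hc)
  have m_b7: "set_borel_measurable lborel {0..L} (\<lambda>x. complex_of_real (- 2 * h x * l\<^sup>2 * k3))" by (rule cont_b(1)[OF c_b7])
  obtain B_b7 where B_b7: "\<And>x. x \<in> {0..L} \<Longrightarrow> cmod (complex_of_real (- 2 * h x * l\<^sup>2 * k3)) \<le> B_b7"
    using cont_b(2)[OF c_b7] by blast
  have c_b8: "continuous_on {0..L} (\<lambda>x. complex_of_real (- 2 * h x * k1))" by (intro continuous_intros ch hc)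
  have m_b8: "set_borel_measurable lborel {0..L} (\<lambda>x. complex_of_real (- 2 * h x * k1))" by (rule cont_b(1)[OF c_b8])
  obtain B_b8 where B_b8: "\<And>x. x \<in> {0..L} \<Longrightarrow> cmod (complex_of_real (- 2 * h x * k1)) \<le> B_b8"
    using cont_b(2)[OF c_b8] by blast
  have c_b9: "continuous_on {0..L} (\<lambda>x. complex_of_real (- 2 * h x * k1 * l))" by (intro continuous_intros ch hc)
  have m_b9: "set_borel_measurable lborel {0..L} (\<lambda>x. complex_of_real (- 2 * h x * k1 * l))" by (rule cont_b(1)[OF c_b9])
  obtain B_b9 where B_b9: "\<And>x. x \<in> {0..L} \<Longrightarrow> cmod (complex_of_real (- 2 * h x * k1 * l)) \<le> B_b9"
    using cont_b(2)[OF c_b9] by blast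
  have c_b10: "continuous_on {0..L} (\<lambda>x. complex_of_real (- 2 * h x * l * k1))" by (intro continuous_intros ch hc)
  have m_b10: "set_borel_measurable lborel {0..L} (\<lambda>x. complex_of_real (- 2 * h x * l * k1))" by (rule cont_b(1)[OF c_b10])
  obtain B_b10 where B_b10: "\<And>x. x \<in> {0..L} \<Longrightarrow> cmod (complex_of_real (- 2 * h x * l * k1)) \<le> B_b10"
    using cont_b(2)[OF c_b10] by blast
  have c_b11: "continuous_on {0..L} (\<lambda>x. complex_of_real (- 2 * h x * l\<^sup>2 * k1))" by (intro continuous_intros ch hc)
  have m_b11: "set_borel_measurable lborel {0..L} (\<lambda>x. complex_of_real (- 2 * h x * l\<^sup>2 * k1))" by (rule cont_b(1)[OF c_b11])
  obtain B_b11 where B_b11: "\<And>x. x \<in> {0..L} \<Longrightarrow> cmod (complex_of_real (- 2 * h x * l\<^sup>2 * k1)) \<le> B_b11"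
    using cont_b(2)[OF c_b11] by blast
  have c_b12: "continuous_on {0..L} (\<lambda>x. complex_of_real (- 2 * h x))" by (intro continuous_intros ch hc)
  have m_b12: "set_borel_measurable lborel {0..L} (\<lambda>x. complex_of_real (- 2 * h x))" by (rule cont_b(1)[OF c_b12])
  obtain B_b12 where B_b12: "\<And>x. x \<in> {0..L} \<Longrightarrow> cmod (complex_of_real (- 2 * h x)) \<le> B_b12"
    using cont_b(2)[OF c_b12] by blast
  have c_b13: "continuous_on {0..L} (\<lambda>x. complex_of_real (h' x * rho1))" by (intro continuous_intros ch hc)
  have m_b13: "set_borel_measurable lborel {0..L} (\<lambda>x. complex_of_real (h' x * rho1))" by (rule cont_b(1)[OF c_b13])
  obtain B_b13 where B_b13: "\<And>x. x \<in> {0..L} \<Longrightarrow> cmod (complex_of_real (h' x * rho1)) \<le> B_b13"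
    using cont_b(2)[OF c_b13] by blast
  have c_b14: "continuous_on {0..L} (\<lambda>x. complex_of_real (h' x * rho2))" by (intro continuous_intros ch hc)
  have m_b14: "set_borel_measurable lborel {0..L} (\<lambda>x. complex_of_real (h' x * rho2))" by (rule cont_b(1)[OF c_b14])
  obtain B_b14 where B_b14: "\<And>x. x \<in> {0..L} \<Longrightarrow> cmod (complex_of_real (h' x * rho2)) \<le> B_b14"
    using cont_b(2)[OF c_b14] by blast
  define W where "W n x = complex_of_real (2 * h x) * G2 n x * cnj (v1x n x)
      + complex_of_real (2 * h x) * G4 n x * cnj (v3x n x)
      + complex_of_real (2 * h x) * G6 n x * cnj (v5x n x)
      + complex_of_real (2 * h x * rho1) * v2 n x * cnj (g1x n x)
      + complex_of_real (2 * h x * rho2) * v4 n x * cnj (g3x n x)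
      + complex_of_real (2 * h x * rho1) * v6 n x * cnj (g5x n x)
      + complex_of_real (- 2 * h x * l\<^sup>2 * k3) * v1 n x * cnj (v1x n x)
      + complex_of_real (- 2 * h x * k1) * v3 n x * cnj (v3x n x)
      + complex_of_real (- 2 * h x * k1 * l) * v5 n x * cnj (v3x n x)
      + complex_of_real (- 2 * h x * l * k1) * v3 n x * cnj (v5x n x)
      + complex_of_real (- 2 * h x * l\<^sup>2 * k1) * v5 n x * cnj (v5x n x)
      + complex_of_real (- 2 * h x) * (complex_of_real (a x) * v6 n x) * cnj (v5x n x)
      + complex_of_real (h' x * rho1) * g1 n x * cnj (q1 n x)
      + complex_of_real (h' x * rho2) * g3 n x * cnj (q3 n x)
      + complex_of_real (h' x * rho1) * g5 n x * cnj (q5 n x)" for n x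
  define J where "J n = B_ba * (LINT x:{0..L}|lborel. cmod (G2 n x) * cmod (v1x n x))
      + B_ba * (LINT x:{0..L}|lborel. cmod (G4 n x) * cmod (v3x n x))
      + B_ba * (LINT x:{0..L}|lborel. cmod (G6 n x) * cmod (v5x n x))
      + B_bb * (LINT x:{0..L}|lborel. cmod (v2 n x) * cmod (g1x n x))
      + B_bc * (LINT x:{0..L}|lborel. cmod (v4 n x) * cmod (g3x n x))
      + B_bb * (LINT x:{0..L}|lborel. cmod (v6 n x) * cmod (g5x n x))
      + B_b7 * (LINT x:{0..L}|lborel. cmod (v1 n x) * cmod (v1x n x))
      + B_b8 * (LINT x:{0..L}|lborel. cmod (v3 n x) * cmod (v3x n x))
      + B_b9 * (LINT x:{0..L}|lborel. cmod (v5 n x) * cmod (v3x n x))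
      + B_b10 * (LINT x:{0..L}|lborel. cmod (v3 n x) * cmod (v5x n x))
      + B_b11 * (LINT x:{0..L}|lborel. cmod (v5 n x) * cmod (v5x n x))
      + B_b12 * (LINT x:{0..L}|lborel. cmod ((complex_of_real (a x) * v6 n x)) * cmod (v5x n x))
      + B_b13 * (LINT x:{0..L}|lborel. cmod (g1 n x) * cmod (q1 n x))
      + B_b14 * (LINT x:{0..L}|lborel. cmod (g3 n x) * cmod (q3 n x))
      + B_b13 * (LINT x:{0..L}|lborel. cmod (g5 n x) * cmod (q5 n x))" for n
  define SPsi where "SPsi n x = rho1 * (h' x * (cmod (v2 n x))\<^sup>2 + 2 * h x * Re (v2x n x * cnj (v2 n x)))
      + rho2 * (h' x * (cmod (v4 n x))\<^sup>2 + 2 * h x * Re (v4x n x * cnj (v4 n x)))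
      + rho1 * (h' x * (cmod (v6 n x))\<^sup>2 + 2 * h x * Re (v6x n x * cnj (v6 n x)))
      + k1 * (h' x * (cmod (v1x n x))\<^sup>2 + 2 * h x * Re (v1xx n x * cnj (v1x n x)))
      + k2 * (h' x * (cmod (v3x n x))\<^sup>2 + 2 * h x * Re (v3xx n x * cnj (v3x n x)))
      + k3 * (h' x * (cmod (v5x n x))\<^sup>2 + 2 * h x * Re (v5xx n x * cnj (v5x n x)))" for n x
  have tptw: "h' x * (rho1 * (cmod (of_real (lam n) * v1 n x))\<^sup>2 + k1 * (cmod (v1x n x))\<^sup>2
              + rho2 * (cmod (of_real (lam n) * v3 n x))\<^sup>2 + k2 * (cmod (v3x n x))\<^sup>2
              + rho1 * (cmod (of_real (lam n) * v5 n x))\<^sup>2 + k3 * (cmod (v5x n x))\<^sup>2)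
     = SPsi n x + Re (W n x)" for n x
    unfolding SPsi_def W_def G2_def G4_def G6_def g1_def g1x_def g2_def g3_def g3x_def
      g4_def g5_def g5x_def g6_def q1_def q3_def q5_def
    by (rule ptw_identity[OF Gform2[OF rnz(1)] Gform4[OF rnz(2)] Gform6[OF rnz(1)]])
  have SP0: "set_integrable lborel {0..L} (SPsi n) \<and> (LINT x:{0..L}|lborel. SPsi n x) = 0" for n
    unfolding SPsi_def
    by (intro sumZ scaleZ conjI energy_int[OF hd hc W2] energy_int[OF hd hc W4] energy_int[OF hd hc W6]
        energy_int[OF hd hc W1x] energy_int[OF hd hc W3x] energy_int[OF hd hc W5x]
        energy_h[OF hd hc h0 hL L0 W2] energy_h[OF hd hc h0 hL L0 W4] energy_h[OF hd hc h0 hL L0 W6]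
        energy_h[OF hd hc h0 hL L0 W1x] energy_h[OF hd hc h0 hL L0 W3x] energy_h[OF hd hc h0 hL L0 W5x])
  have W_int: "set_integrable lborel {0..L} (W n) \<and> cmod (LINT x:{0..L}|lborel. W n x) \<le> J n" for n
    unfolding W_def J_def
    by (intro sumI tbc Lv Lg LG Lq Lav6 m_ba B_ba m_bb B_bb m_bc B_bc m_b7 B_b7 m_b8 B_b8 m_b9 B_b9 m_b10 B_b10 m_b11 B_b11 m_b12 B_b12 m_b13 B_b13 m_b14 B_b14) auto
  have J_lim: "J \<longlonglongrightarrow> 0"
  proof -
    have "J \<longlonglongrightarrow> B_ba * 0 + B_ba * 0 + B_ba * 0 + B_bb * 0 + B_bc * 0 + B_bb * 0 + B_b7 * 0 + B_b8 * 0 + B_b9 * 0 + B_b10 * 0 + B_b11 * 0 + B_b12 * 0 + B_b13 * 0 + B_b14 * 0 + B_b13 * 0"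
      unfolding J_def by (intro tendsto_intros lim_pq[OF LG(1) Lv(2) lim_G(1) Bs(1)] lim_pq[OF LG(2) Lv(7) lim_G(2) Bs(2)] lim_pq[OF LG(3) Lv(12) lim_G(3) Bs(3)] lim_pq'[OF Lv(4) Lg(2) lim_g(4) Bs(4)] lim_pq'[OF Lv(9) Lg(5) lim_g(5) Bs(5)] lim_pq'[OF Lv(14) Lg(8) lim_g(6) Bs(6)] lim_pq[OF Lv(1) Lv(2) lim_v(1) Bs(1)] lim_pq[OF Lv(6) Lv(7) lim_v(2) Bs(2)] lim_pq[OF Lv(11) Lv(7) lim_v(3) Bs(2)] lim_pq[OF Lv(6) Lv(12) lim_v(2) Bs(3)] lim_pq[OF Lv(11) Lv(12) lim_v(3) Bs(3)] lim_pq[OF Lav6 Lv(12) av6_lim Bs(3)] lim_pq[OF Lg(1) Lq(1) lim_g(1) Bq(1)] lim_pq[OF Lg(4) Lq(2) lim_g(2) Bq(2)] lim_pq[OF Lg(7) Lq(3) lim_g(3) Bq(3)])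
    then show ?thesis by simp
  qed
  have T_le: "norm (LINT x:{0..L}|lborel. h' x *
               (rho1 * (cmod (of_real (lam n) * v1 n x))\<^sup>2 + k1 * (cmod (v1x n x))\<^sup>2
              + rho2 * (cmod (of_real (lam n) * v3 n x))\<^sup>2 + k2 * (cmod (v3x n x))\<^sup>2
              + rho1 * (cmod (of_real (lam n) * v5 n x))\<^sup>2 + k3 * (cmod (v5x n x))\<^sup>2)) \<le> J n" for n
  proof -
    have "(LINT x:{0..L}|lborel. h' x *
               (rho1 * (cmod (of_real (lam n) * v1 n x))\<^sup>2 + k1 * (cmod (v1x n x))\<^sup>2
              + rho2 * (cmod (of_real (lam n) * v3 n x))\<^sup>2 + k2 * (cmod (v3x n x))\<^sup>2
              + rho1 * (cmod (of_real (lam n) * v5 n x))\<^sup>2 + k3 * (cmod (v5x n x))\<^sup>2))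
        = (LINT x:{0..L}|lborel. SPsi n x + Re (W n x))" unfolding tptw ..
    also have "\<dots> = (LINT x:{0..L}|lborel. SPsi n x) + (LINT x:{0..L}|lborel. Re (W n x))"
      using SP0[of n] sint_Re(1)[OF conjunct1[OF W_int[of n]]] by (simp add: set_integral_add(2))
    also have "\<dots> = Re (LINT x:{0..L}|lborel. W n x)" using SP0[of n] sint_Re(2)[OF conjunct1[OF W_int[of n]]] by simp
    finally have "norm (LINT x:{0..L}|lborel. h' x *
               (rho1 * (cmod (of_real (lam n) * v1 n x))\<^sup>2 + k1 * (cmod (v1x n x))\<^sup>2
              + rho2 * (cmod (of_real (lam n) * v3 n x))\<^sup>2 + k2 * (cmod (v3x n x))\<^sup>2
              + rho1 * (cmod (of_real (lam n) * v5 n x))\<^sup>2 + k3 * (cmod (v5x n x))\<^sup>2))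
        = \<bar>Re (LINT x:{0..L}|lborel. W n x)\<bar>" by simp
    also have "\<dots> \<le> cmod (LINT x:{0..L}|lborel. W n x)" by (rule abs_Re_le_cmod)
    also have "\<dots> \<le> J n" using W_int[of n] by blast
    finally show ?thesis .
  qed
  show "(\<lambda>n. LINT x:{0..L}|lborel. h' x *
               (rho1 * (cmod (of_real (lam n) * v1 n x))\<^sup>2 + k1 * (cmod (v1x n x))\<^sup>2
              + rho2 * (cmod (of_real (lam n) * v3 n x))\<^sup>2 + k2 * (cmod (v3x n x))\<^sup>2
              + rho1 * (cmod (of_real (lam n) * v5 n x))\<^sup>2 + k3 * (cmod (v5x n x))\<^sup>2))
             \<longlonglongrightarrow> 0"
    by (rule Lim_null_comparison[OF always_eventually J_lim]) (use T_le in blast)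

qed

end
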